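(* Let $L$ be an algebraic frame, $X_L$ its Priestley space, and $Y_L$ the spatial part of $X_L$. The following are equivalent: (1) $L$ is a coherent frame; (2) $X_L$ is a coherent L-space; (3) $Y_L$ is a spectral space.
   Context: A frame is a complete lattice satisfying $a\wedge\bigvee S=\bigvee\{a\wedge s\mid s\in S\}$. In a frame $L$, $a\ll b$ means whenever $b\le\bigvee S$ there is finite $T\subseteq S$ with $a\le\bigvee T$; $a$ is compact if $a\ll a$; $K(L)$ is the set of compact elements; $L$ is compact if its top is compact. $L$ is algebraic if $a=\bigvee\{b\in K(L)\mid b\le a\}$ for all $a$; arithmetic if algebraic and $\ll$ is stable ($a\ll b,c$ implies $a\ll b\wedge c$); coherent if arithmetic and compact. A Priestley space is a Stone space $X$ with a partial order such that clopen upsets separate points. An L-space is a Priestley space in which the downset of each clopen set is clopen and the closure of each open upset is open. ${\sf ClopUp}(X)$ is the set of clopen upsets; $\mathrm{cl}$ denotes closure. The Priestley space $X_L$ is the set of prime filters of $L$ ordered by inclusion with topology generated by the sets $\varphi(a)=\{x\mid a\in x\}$ and their complements. The spatial part of $X$ is $Y=\{y\in X\mid{\downarrow}y\text{ clopen}\}$, topologized by declaring $V\subseteq Y$ open iff $V=U\cap Y$ for some $U\in{\sf ClopUp}(X)$. A Scott upset is a closed upset $F$ with $\min F\subseteq Y$; ${\sf ClopSUp}(X)$ is the set of clopen Scott upsets. For $U,V\in{\sf ClopUp}(X)$, $V\ll U$ means that for every open upset $W$, $U\subseteq\mathrm{cl}\,W$ implies $V\subseteq W$; $\ker U=\bigcup\{V\in{\sf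 ClopUp}(X)\mid V\ll U\}$; $\mathrm{core}\,U=\bigcup\{V\in{\sf ClopSUp}(X)\mid V\subseteq U\}$. A coherent L-space is an L-space $X$ such that $\mathrm{core}\,U$ is dense in $U$ for each $U\in{\sf ClopUp}(X)$, $\ker(U\cap V)=\ker U\cap\ker V$ for all $U,V\in{\sf ClopUp}(X)$, and $X=\ker X$. A spectral space is a compact sober space with a basis of compact open sets in which the intersection of two compact open sets is compact. *)

theory Defs
  imports "HOL-Analysis.Analysis"
begin

definition frame_law :: "'a::complete_lattice itself \<Rightarrow> bool" where
  "frame_law _ \<longleftrightarrow> (\<forall>(a::'a) S. inf a (Sup S) = Sup ((\<lambda>s. inf a s) ` S))"

definition way_below :: "'a::complete_lattice \<Rightarrow> 'a \<Rightarrow> bool" where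
  "way_below a b \<longleftrightarrow> (\<forall>S. b \<le> Sup S \<longrightarrow> (\<exists>T. finite T \<and> T \<subseteq> S \<and> a \<le> Sup T))"

definition compact_el :: "'a::complete_lattice \<Rightarrow> bool" where
  "compact_el a \<longleftrightarrow> way_below a a"

definition algebraic_frame :: "'a::complete_lattice itself \<Rightarrow> bool" where
  "algebraic_frame T \<longleftrightarrow> frame_law T \<and>
     (\<forall>a::'a. a = Sup {b. compact_el b \<and> b \<le> a})"

definition arithmetic_frame :: "'a::complete_lattice itself \<Rightarrow> bool" where
  "arithmetic_frame T \<longleftrightarrow> algebraic_frame T \<and>
     (\<forall>a b c::'a. way_below a b \<and> way_below a c \<longrightarrow> way_below a (inf b c))"

definition coherent_frame :: "'a::complete_lattice itself \<Rightarrow> bool" where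
  "coherent_frame T \<longleftrightarrow> arithmetic_frame T \<and> compact_el (top::'a)"

definition prime_filter :: "'a::complete_lattice set \<Rightarrow> bool" where
  "prime_filter F \<longleftrightarrow> top \<in> F \<and> bot \<notin> F
     \<and> (\<forall>a b. a \<in> F \<and> a \<le> b \<longrightarrow> b \<in> F)
     \<and> (\<forall>a b. a \<in> F \<and> b \<in> F \<longrightarrow> inf a b \<in> F)
     \<and> (\<forall>a b. sup a b \<in> F \<longrightarrow> a \<in> F \<or> b \<in> F)"

definition pts :: "'a::complete_lattice set set" where
  "pts = {F. prime_filter F}"

definition phi :: "'a::complete_lattice \<Rightarrow> 'a set set" where
  "phi a = {x \<in> pts. a \<in> x}"

text \<open>The Priestley topology on the set of prime filters (order: inclusion).\<close>
definition XL_top :: "'a::complete_lattice set topology" where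
  "XL_top = topology_generated_by (range phi \<union> range (\<lambda>a. pts - phi a))"

definition clopenin :: "'p topology \<Rightarrow> 'p set \<Rightarrow> bool" where
  "clopenin X U \<longleftrightarrow> closedin X U \<and> openin X U"

definition upset :: "'p topology \<Rightarrow> ('p \<Rightarrow> 'p \<Rightarrow> bool) \<Rightarrow> 'p set \<Rightarrow> bool" where
  "upset X le U \<longleftrightarrow> U \<subseteq> topspace X \<and> (\<forall>x\<in>U. \<forall>y\<in>topspace X. le x y \<longrightarrow> y \<in> U)"

definition downset_of :: "'p topology \<Rightarrow> ('p \<Rightarrow> 'p \<Rightarrow> bool) \<Rightarrow> 'p set \<Rightarrow> 'p set" where
  "downset_of X le A = {y \<in> topspace X. \<exists>x\<in>A. le y x}"

definition partial_order_on_space :: "'p topology \<Rightarrow> ('p \<Rightarrow> 'p \<Rightarrow> bool) \<Rightarrow> bool" where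
  "partial_order_on_space X le \<longleftrightarrow>
     (\<forall>x\<in>topspace X. le x x)
     \<and> (\<forall>x\<in>topspace X. \<forall>y\<in>topspace X. le x y \<and> le y x \<longrightarrow> x = y)
     \<and> (\<forall>x\<in>topspace X. \<forall>y\<in>topspace X. \<forall>z\<in>topspace X. le x y \<and> le y z \<longrightarrow> le x z)"

definition stone_space :: "'p topology \<Rightarrow> bool" where
  "stone_space X \<longleftrightarrow> compact_space X \<and> Hausdorff_space X
     \<and> (\<forall>U x. openin X U \<and> x \<in> U \<longrightarrow> (\<exists>C. clopenin X C \<and> x \<in> C \<and> C \<subseteq> U))"

definition ClopUp :: "'p topology \<Rightarrow> ('p \<Rightarrow> 'p \<Rightarrow> bool) \<Rightarrow> 'p set set" where
  "ClopUp X le = {U. clopenin X U \<and> upset X le U}"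

definition priestley_space :: "'p topology \<Rightarrow> ('p \<Rightarrow> 'p \<Rightarrow> bool) \<Rightarrow> bool" where
  "priestley_space X le \<longleftrightarrow> stone_space X \<and> partial_order_on_space X le
     \<and> (\<forall>x\<in>topspace X. \<forall>y\<in>topspace X. \<not> le x y \<longrightarrow> (\<exists>U\<in>ClopUp X le. x \<in> U \<and> y \<notin> U))"

definition L_space :: "'p topology \<Rightarrow> ('p \<Rightarrow> 'p \<Rightarrow> bool) \<Rightarrow> bool" where
  "L_space X le \<longleftrightarrow> priestley_space X le
     \<and> (\<forall>U. clopenin X U \<longrightarrow> clopenin X (downset_of X le U))
     \<and> (\<forall>U. openin X U \<and> upset X le U \<longrightarrow> openin X (X closure_of U))"

definition spatial_part :: "'p topology \<Rightarrow> ('p \<Rightarrow> 'p \<Rightarrow> bool) \<Rightarrow> 'p set" where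
  "spatial_part X le = {y \<in> topspace X. clopenin X (downset_of X le {y})}"

definition spatial_top :: "'p topology \<Rightarrow> ('p \<Rightarrow> 'p \<Rightarrow> bool) \<Rightarrow> 'p topology" where
  "spatial_top X le = topology_generated_by ((\<lambda>U. U \<inter> spatial_part X le) ` ClopUp X le)"

definition minimal_of :: "('p \<Rightarrow> 'p \<Rightarrow> bool) \<Rightarrow> 'p set \<Rightarrow> 'p set" where
  "minimal_of le F = {x \<in> F. \<forall>y\<in>F. le y x \<longrightarrow> y = x}"

definition scott_upset :: "'p topology \<Rightarrow> ('p \<Rightarrow> 'p \<Rightarrow> bool) \<Rightarrow> 'p set \<Rightarrow> bool" where
  "scott_upset X le F \<longleftrightarrow> closedin X F \<and> upset X le F \<and> minimal_of le F \<subseteq> spatial_part X le"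

definition ClopSUp :: "'p topology \<Rightarrow> ('p \<Rightarrow> 'p \<Rightarrow> bool) \<Rightarrow> 'p set set" where
  "ClopSUp X le = {U. clopenin X U \<and> scott_upset X le U}"

definition way_below_sp :: "'p topology \<Rightarrow> ('p \<Rightarrow> 'p \<Rightarrow> bool) \<Rightarrow> 'p set \<Rightarrow> 'p set \<Rightarrow> bool" where
  "way_below_sp X le V U \<longleftrightarrow>
     (\<forall>W. openin X W \<and> upset X le W \<and> U \<subseteq> X closure_of W \<longrightarrow> V \<subseteq> W)"

definition ker_sp :: "'p topology \<Rightarrow> ('p \<Rightarrow> 'p \<Rightarrow> bool) \<Rightarrow> 'p set \<Rightarrow> 'p set" where
  "ker_sp X le U = \<Union>{V \<in> ClopUp X le. way_below_sp X le V U}"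

definition core_sp :: "'p topology \<Rightarrow> ('p \<Rightarrow> 'p \<Rightarrow> bool) \<Rightarrow> 'p set \<Rightarrow> 'p set" where
  "core_sp X le U = \<Union>{V \<in> ClopSUp X le. V \<subseteq> U}"

definition coherent_L_space :: "'p topology \<Rightarrow> ('p \<Rightarrow> 'p \<Rightarrow> bool) \<Rightarrow> bool" where
  "coherent_L_space X le \<longleftrightarrow> L_space X le
     \<and> (\<forall>U\<in>ClopUp X le. U \<subseteq> X closure_of (core_sp X le U))
     \<and> (\<forall>U\<in>ClopUp X le. \<forall>V\<in>ClopUp X le. ker_sp X le (U \<inter> V) = ker_sp X le U \<inter> ker_sp X le V)
     \<and> topspace X = ker_sp X le (topspace X)"

definition irreducible_in :: "'p topology \<Rightarrow> 'p set \<Rightarrow> bool" where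
  "irreducible_in T C \<longleftrightarrow> C \<noteq> {} \<and> C \<subseteq> topspace T \<and>
     (\<forall>A B. closedin T A \<and> closedin T B \<and> C \<subseteq> A \<union> B \<longrightarrow> C \<subseteq> A \<or> C \<subseteq> B)"

definition sober_space :: "'p topology \<Rightarrow> bool" where
  "sober_space T \<longleftrightarrow> (\<forall>C. closedin T C \<and> irreducible_in T C \<longrightarrow>
     (\<exists>!x. x \<in> topspace T \<and> C = T closure_of {x}))"

definition spectral_space :: "'p topology \<Rightarrow> bool" where
  "spectral_space T \<longleftrightarrow> compact_space T \<and> sober_space T
     \<and> (\<forall>U x. openin T U \<and> x \<in> U \<longrightarrow> (\<exists>K. openin T K \<and> compactin T K \<and> x \<in> K \<and> K \<subseteq> U))
     \<and> (\<forall>K1 K2. openin T K1 \<and> compactin T K1 \<and> openin T K2 \<and> compactin T K2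
            \<longrightarrow> compactin T (K1 \<inter> K2))"

end

theory Submission
  imports Defs
begin


lemma frame_dist:
  assumes FL: "frame_law TYPE('a::complete_lattice)"
  shows "inf (a::'a) (sup b c) = sup (inf a b) (inf a c)"
proof -
  have "inf a (Sup {b, c}) = Sup ((\<lambda>s. inf a s) ` {b,c})"
    using FL unfolding frame_law_def by blast
  then show ?thesis by simp
qed

lemma pf_up: "prime_filter x \<Longrightarrow> a \<in> x \<Longrightarrow> a \<le> b \<Longrightarrow> b \<in> x"
  unfolding prime_filter_def by blast
lemma pf_inf: "prime_filter x \<Longrightarrow> a \<in> x \<Longrightarrow> b \<in> x \<Longrightarrow> inf a b \<in> x"
  unfolding prime_filter_def by blast
lemma pf_inf_iff: "prime_filter x \<Longrightarrow> inf a b \<in> x \<longleftrightarrow> a \<in> x \<and> b \<in> x"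
  unfolding prime_filter_def by (meson inf_le1 inf_le2)
lemma pf_sup_iff: "prime_filter x \<Longrightarrow> sup a b \<in> x \<longleftrightarrow> a \<in> x \<or> b \<in> x"
  unfolding prime_filter_def by (meson sup_ge1 sup_ge2)
lemma pf_top: "prime_filter x \<Longrightarrow> top \<in> x"
  unfolding prime_filter_def by blast
lemma pf_bot: "prime_filter x \<Longrightarrow> bot \<notin> x"
  unfolding prime_filter_def by blast

lemma pf_Inf: "finite T \<Longrightarrow> prime_filter x \<Longrightarrow> T \<subseteq> x \<Longrightarrow> Inf T \<in> x"
proof (induction T rule: finite_induct)
  case empty then show ?case by (simp add: pf_top)
next
  case (insert t T) then show ?case by (simp add: pf_inf)
qed

lemma pf_Sup: "finite T \<Longrightarrow> prime_filter x \<Longrightarrow> Sup T \<in> x \<Longrightarrow> \<exists>t\<in>T. t \<in> x"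
proof (induction T rule: finite_induct)
  case empty then show ?case by (simp add: pf_bot)
next
  case (insert t T) then show ?case by (auto simp: pf_sup_iff)
qed

definition upc :: "'a::complete_lattice set \<Rightarrow> bool" where
  "upc F \<longleftrightarrow> (\<forall>a b. a \<in> F \<and> a \<le> b \<longrightarrow> b \<in> F) \<and> (\<forall>a b. a \<in> F \<and> b \<in> F \<longrightarrow> inf a b \<in> F)"

lemma prime_ideal_thm:
  assumes FL: "frame_law TYPE('a::complete_lattice)"
    and F: "upc (F::'a set)" "top \<in> F"
    and I: "\<forall>a b. b \<in> I \<and> a \<le> b \<longrightarrow> a \<in> I" "\<forall>a b. a \<in> I \<and> b \<in> I \<longrightarrow> sup a b \<in> I" "bot \<in> I"
    and disj: "F \<inter> I = {}"
  shows "\<exists>x. prime_filter x \<and> F \<subseteq> x \<and> x \<inter> I = {}"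
proof -
  define A where "A = {G. upc G \<and> F \<subseteq> G \<and> G \<inter> I = {}}"
  have "\<forall>C\<in>chains A. \<exists>U\<in>A. \<forall>X\<in>C. X \<subseteq> U"
  proof
    fix C assume C: "C \<in> chains A"
    show "\<exists>U\<in>A. \<forall>X\<in>C. X \<subseteq> U"
    proof (cases "C = {}")
      case True then show ?thesis using F disj by (auto simp: A_def)
    next
      case False
      have ch: "\<And>X Y. X \<in> C \<Longrightarrow> Y \<in> C \<Longrightarrow> X \<subseteq> Y \<or> Y \<subseteq> X"
        using C by (auto simp: chains_def chain_subset_def)
      have CA: "C \<subseteq> A" using C by (auto simp: chains_def)
      have "upc (\<Union>C)"
        unfolding upc_def
      proof (intro conjI allI impI)
        fix a b assume "a \<in> \<Union>C \<and> a \<le> b"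
        then obtain X where "X \<in> C" "a \<in> X" "a \<le> b" by blast
        then have "b \<in> X" using CA unfolding A_def upc_def by blast
        then show "b \<in> \<Union>C" using \<open>X \<in> C\<close> by blast
      next
        fix a b assume "a \<in> \<Union>C \<and> b \<in> \<Union>C"
        then obtain X Y where XY: "X \<in> C" "Y \<in> C" "a \<in> X" "b \<in> Y" by blast
        then show "inf a b \<in> \<Union>C"
          using ch[OF XY(1,2)] CA XY unfolding A_def upc_def by blast
      qed
      moreover have "F \<subseteq> \<Union>C" using False CA by (auto simp: A_def)
      moreover have "\<Union>C \<inter> I = {}" using CA by (auto simp: A_def)
      ultimately show ?thesis by (auto simp: A_def)
    qed
  qed
  from Zorn_Lemma2[OF this] obtain M where MA: "M \<in> A" and Mmax: "\<forall>X\<in>A. M \<subseteq> X \<longrightarrow> X = M"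
    by blast
  have Mu: "upc M" and FM: "F \<subseteq> M" and MI: "M \<inter> I = {}" using MA by (auto simp: A_def)
  have ext: "\<exists>m\<in>M. inf m a \<in> I" if "a \<notin> M" for a
  proof (rule ccontr)
    assume nn: "\<not> (\<exists>m\<in>M. inf m a \<in> I)"
    define G where "G = {c. \<exists>m\<in>M. inf m a \<le> c}"
    have "upc G" unfolding upc_def G_def
    proof (intro conjI allI impI)
      fix c d assume "c \<in> {c. \<exists>m\<in>M. inf m a \<le> c} \<and> c \<le> d"
      then show "d \<in> {c. \<exists>m\<in>M. inf m a \<le> c}" using order_trans by blast
    next
      fix c d assume "c \<in> {c. \<exists>m\<in>M. inf m a \<le> c} \<and> d \<in> {c. \<exists>m\<in>M. inf m a \<le> c}"
      then obtain m1 m2 where m: "m1 \<in> M" "m2 \<in> M" "inf m1 a \<le> c" "inf m2 a \<le> d" by blast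
      have "inf m1 m2 \<in> M" using Mu m by (auto simp: upc_def)
      moreover have "inf (inf m1 m2) a \<le> inf c d" using m
        by (meson inf.cobounded1 inf.cobounded2 le_inf_iff order_trans)
      ultimately show "inf c d \<in> {c. \<exists>m\<in>M. inf m a \<le> c}" by blast
    qed
    moreover have "M \<subseteq> G" unfolding G_def using inf_le1 by blast
    moreover have "G \<inter> I = {}"
    proof -
      { fix c assume "c \<in> G" "c \<in> I"
        then obtain m where "m \<in> M" "inf m a \<le> c" by (auto simp: G_def)
        then have "inf m a \<in> I" using I(1) \<open>c \<in> I\<close> by blast
        with nn \<open>m \<in> M\<close> have False by blast }
      then show ?thesis by blast
    qed
    ultimately have "G \<in> A" using FM by (auto simp: A_def)
    with Mmax \<open>M \<subseteq> G\<close> have GM: "G = M" by blast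
    have "top \<in> M" using FM F by blast
    moreover have "inf top a \<le> a" by simp
    ultimately have "a \<in> G" unfolding G_def by blast
    then show False using that GM by blast
  qed
  have "prime_filter M"
    unfolding prime_filter_def
  proof (intro conjI allI impI)
    show "top \<in> M" using FM F by blast
    show "bot \<notin> M" using MI I by blast
  next
    fix a b assume "a \<in> M \<and> a \<le> b" then show "b \<in> M" using Mu by (auto simp: upc_def)
  next
    fix a b assume "a \<in> M \<and> b \<in> M" then show "inf a b \<in> M" using Mu by (auto simp: upc_def)
  next
    fix a b assume ab: "sup a b \<in> M"
    show "a \<in> M \<or> b \<in> M"
    proof (rule ccontr)
      assume "\<not> (a \<in> M \<or> b \<in> M)"
      then obtain m1 m2 where m: "m1 \<in> M" "m2 \<in> M" "inf m1 a \<in> I" "inf m2 b \<in> I"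
        using ext by blast
      have mm: "inf (inf m1 m2) (sup a b) \<in> M" using Mu m ab by (auto simp: upc_def)
      have "inf (inf m1 m2) (sup a b) = sup (inf (inf m1 m2) a) (inf (inf m1 m2) b)"
        using frame_dist[OF FL] by blast
      also have "\<dots> \<le> sup (inf m1 a) (inf m2 b)"
        by (meson inf.cobounded1 inf.cobounded2 inf_mono order_refl sup_mono le_infI1 le_infI2)
      finally have "inf (inf m1 m2) (sup a b) \<in> I" using I m by blast
      with mm MI show False by blast
    qed
  qed
  then show ?thesis using FM MI by blast
qed



lemma sep_pf:
  assumes FL: "frame_law TYPE('a::complete_lattice)" and nle: "\<not> (a::'a) \<le> b"
  shows "\<exists>x. prime_filter x \<and> a \<in> x \<and> b \<notin> x"
proof -
  have "\<exists>x. prime_filter x \<and> {c. a \<le> c} \<subseteq> x \<and> x \<inter> {c. c \<le> b} = {}"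
    apply (rule prime_ideal_thm[OF FL])
    using nle by (auto simp: upc_def intro: order_trans)
  then show ?thesis by auto
qed

lemma phi_sub: "phi a \<subseteq> pts" unfolding phi_def by auto
lemma in_phi: "x \<in> phi a \<longleftrightarrow> prime_filter x \<and> a \<in> x" unfolding phi_def pts_def by auto
lemma in_pts: "x \<in> pts \<longleftrightarrow> prime_filter x" unfolding pts_def by auto
lemma phi_top: "phi top = pts" unfolding phi_def pts_def by (auto simp: pf_top)
lemma phi_bot: "phi bot = {}" unfolding phi_def pts_def by (auto simp: pf_bot)
lemma phi_inf: "phi (inf a b) = phi a \<inter> phi b" unfolding phi_def pts_def by (auto simp: pf_inf_iff)
lemma phi_sup: "phi (sup a b) = phi a \<union> phi b" unfolding phi_def pts_def by (auto simp: pf_sup_iff)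
lemma phi_mono: "a \<le> b \<Longrightarrow> phi a \<subseteq> phi b" unfolding phi_def pts_def by (auto intro: pf_up)
lemma phi_Inf: "finite T \<Longrightarrow> phi (Inf T) = pts \<inter> \<Inter>(phi ` T)"
  by (induction T rule: finite_induct) (auto simp: phi_top phi_inf phi_sub)
lemma phi_Sup_fin: "finite T \<Longrightarrow> phi (Sup T) = \<Union>(phi ` T)"
  by (induction T rule: finite_induct) (auto simp: phi_bot phi_sup)
lemma phi_Sup_ge: "\<Union>(phi ` T) \<subseteq> phi (Sup T)"
  by (simp add: SUP_least Sup_upper phi_mono)

lemma phi_le_iff:
  assumes FL: "frame_law TYPE('a::complete_lattice)"
  shows "phi (a::'a) \<subseteq> phi b \<longleftrightarrow> a \<le> b"
proof
  assume "phi a \<subseteq> phi b"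
  then show "a \<le> b" using sep_pf[OF FL, of a b] unfolding phi_def pts_def by blast
qed (rule phi_mono)

lemma phi_eq_iff:
  assumes FL: "frame_law TYPE('a::complete_lattice)"
  shows "phi (a::'a) = phi b \<longleftrightarrow> a = b"
  using phi_le_iff[OF FL] by (metis order_antisym subset_antisym order_refl)

lemma topspace_XL: "topspace (XL_top :: 'a::complete_lattice set topology) = pts"
  unfolding XL_top_def topology_generated_by_topspace
  using phi_sub phi_top by blast

lemma openin_phi: "openin (XL_top :: 'a::complete_lattice set topology) (phi a)"
  unfolding XL_top_def by (rule topology_generated_by_Basis) auto

lemma openin_cphi: "openin (XL_top :: 'a::complete_lattice set topology) (pts - phi a)"
  unfolding XL_top_def by (rule topology_generated_by_Basis) auto

lemma closedin_phi: "closedin (XL_top :: 'a::complete_lattice set topology) (phi a)"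
  unfolding closedin_def topspace_XL using openin_cphi phi_sub by blast

lemma closedin_cphi: "closedin (XL_top :: 'a::complete_lattice set topology) (pts - phi a)"
proof -
  have "pts - (pts - phi a) = phi a" using phi_sub by blast
  then show ?thesis unfolding closedin_def topspace_XL using openin_phi by auto
qed

lemma basic_nbhd_gen:
  "generate_topology_on (range phi \<union> range (\<lambda>a. pts - phi a)) U \<Longrightarrow>
    \<forall>x\<in>U. \<exists>c d. c \<in> x \<and> d \<notin> x \<and> phi c - phi d \<subseteq> (U :: 'a::complete_lattice set set)"
proof (induction rule: generate_topology_on.induct)
  case Empty then show ?case by simp
next
  case (Int a b)
  have "openin (XL_top :: 'a set topology) a" unfolding XL_top_def using Int.hyps(1)
    by (simp add: openin_topology_generated_by_iff)
  then have ap: "a \<subseteq> pts" using openin_subset topspace_XL by metis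
  show ?case
  proof
    fix x assume x: "x \<in> a \<inter> b"
    then have pf: "prime_filter x" using ap in_pts by blast
    obtain c1 d1 where 1: "c1 \<in> x" "d1 \<notin> x" "phi c1 - phi d1 \<subseteq> a" using Int.IH(1) x by blast
    obtain c2 d2 where 2: "c2 \<in> x" "d2 \<notin> x" "phi c2 - phi d2 \<subseteq> b" using Int.IH(2) x by blast
    have "inf c1 c2 \<in> x" "sup d1 d2 \<notin> x" using 1 2 pf by (auto simp: pf_inf_iff pf_sup_iff)
    moreover have "phi (inf c1 c2) - phi (sup d1 d2) \<subseteq> a \<inter> b"
      using 1 2 by (auto simp: phi_inf phi_sup)
    ultimately show "\<exists>c d. c \<in> x \<and> d \<notin> x \<and> phi c - phi d \<subseteq> a \<inter> b"
      by (intro exI[of _ "inf c1 c2"] exI[of _ "sup d1 d2"]) simp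
  qed
next
  case (UN K)
  show ?case
  proof
    fix x assume "x \<in> \<Union>K"
    then obtain k where k: "k \<in> K" "x \<in> k" by blast
    then obtain c d where "c \<in> x" "d \<notin> x" "phi c - phi d \<subseteq> k" using UN.IH by meson
    then show "\<exists>c d. c \<in> x \<and> d \<notin> x \<and> phi c - phi d \<subseteq> \<Union>K"
      using k by (intro exI[of _ c] exI[of _ d]) blast
  qed
next
  case (Basis s)
  show ?case
  proof
    fix x assume x: "x \<in> s"
    show "\<exists>c d. c \<in> x \<and> d \<notin> x \<and> phi c - phi d \<subseteq> s"
    proof (cases "s \<in> range phi")
      case True
      then obtain a where a: "s = phi a" by blast
      then have "prime_filter x" using x in_phi by blast
      then show ?thesis using x a by (intro exI[of _ a] exI[of _ bot]) (auto simp: in_phi pf_bot)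
    next
      case False
      then obtain a where a: "s = pts - phi a" using Basis by blast
      then have "prime_filter x" using x in_pts by blast
      then show ?thesis using x a phi_sub by (intro exI[of _ top] exI[of _ a]) (auto simp: in_phi pf_top)
    qed
  qed
qed

lemma basic_nbhd:
  assumes "openin (XL_top :: 'a::complete_lattice set topology) U" "x \<in> U"
  shows "\<exists>c d. c \<in> x \<and> d \<notin> x \<and> phi c - phi d \<subseteq> U"
proof -
  have "generate_topology_on (range phi \<union> range (\<lambda>a. pts - phi a)) U"
    using assms(1) unfolding XL_top_def by (simp add: openin_topology_generated_by_iff)
  then show ?thesis using basic_nbhd_gen assms(2) by blast
qed

lemma openin_basic: "openin (XL_top :: 'a::complete_lattice set topology) (phi c - phi d)"
proof -
  have "phi c - phi d = phi c \<inter> (pts - phi d)" using phi_sub by blast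
  then show ?thesis using openin_phi openin_cphi by (metis openin_Int)
qed

lemma closedin_basic: "closedin (XL_top :: 'a::complete_lattice set topology) (phi c - phi d)"
proof -
  have "phi c - phi d = phi c \<inter> (pts - phi d)" using phi_sub by blast
  then show ?thesis using closedin_phi closedin_cphi by (metis closedin_Int)
qed



lemma compact_XL:
  assumes FL: "frame_law TYPE('a::complete_lattice)"
  shows "compact_space (XL_top :: 'a set topology)"
proof -
  define B :: "'a set set set" where "B = range phi \<union> range (\<lambda>a. pts - phi a)"
  have UB: "\<Union>B = pts" unfolding B_def using phi_sub phi_top by blast
  have top_eq: "topology (arbitrary union_of (finite intersection_of (\<lambda>x. x \<in> B) relative_to \<Union>B)) = XL_top"
  proof (rule topology_base_unique)
    fix S assume "(finite intersection_of (\<lambda>x. x \<in> B) relative_to \<Union> B) S"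
    then obtain T \<U> where T: "finite \<U>" "\<U> \<subseteq> B" "\<Inter>\<U> = T" "S = pts \<inter> T"
      unfolding relative_to_def intersection_of_def UB by auto
    have "openin XL_top (pts \<inter> \<Inter>\<U>)"
      apply (rule openin_Int_Inter[OF T(1)])
      using topspace_XL[where 'a='a] openin_topspace[of "XL_top :: 'a set topology"] apply simp
      using T(2) unfolding B_def using openin_phi openin_cphi by blast
    then show "openin XL_top S" using T by simp
  next
    fix U x assume "openin (XL_top :: 'a set topology) U" "x \<in> U"
    then obtain c d where cd: "c \<in> x" "d \<notin> x" "phi c - phi d \<subseteq> U" using basic_nbhd by blast
    have "x \<in> pts" using \<open>openin XL_top U\<close> \<open>x \<in> U\<close> openin_subset topspace_XL by blast
    have "(finite intersection_of (\<lambda>x. x \<in> B)) (\<Inter>{phi c, pts - phi d})"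
      by (rule finite_intersection_of_Inter) (auto simp: B_def intro!: finite_intersection_of_inc)
    then have "(finite intersection_of (\<lambda>x. x \<in> B) relative_to \<Union> B) (pts \<inter> \<Inter>{phi c, pts - phi d})"
      unfolding UB by (rule relative_to_inc)
    moreover have "pts \<inter> \<Inter>{phi c, pts - phi d} = phi c - phi d" using phi_sub by auto
    moreover have "x \<in> phi c - phi d" using cd \<open>x \<in> pts\<close> by (auto simp: phi_def)
    ultimately show "\<exists>B'. (finite intersection_of (\<lambda>x. x \<in> B) relative_to \<Union> B) B' \<and> x \<in> B' \<and> B' \<subseteq> U"
      using cd by metis
  qed
  show ?thesis
  proof (rule Alexander_subbase[OF top_eq])
    fix C assume C: "C \<subseteq> B" "\<Union>C = topspace (XL_top :: 'a set topology)"
    define A where "A = {a. phi a \<in> C}"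
    define Bs where "Bs = {b. pts - phi b \<in> C}"
    define I where "I = {c. \<exists>T. finite T \<and> T \<subseteq> A \<and> c \<le> Sup T}"
    define F where "F = {c. \<exists>T. finite T \<and> T \<subseteq> Bs \<and> Inf T \<le> c}"
    show "\<exists>C'. finite C' \<and> C' \<subseteq> C \<and> \<Union>C' = topspace XL_top"
    proof (cases "F \<inter> I = {}")
      case True
      have uF: "upc F" unfolding upc_def F_def
      proof (intro conjI allI impI)
        fix a b assume "a \<in> {c. \<exists>T. finite T \<and> T \<subseteq> Bs \<and> Inf T \<le> c} \<and> a \<le> b"
        then show "b \<in> {c. \<exists>T. finite T \<and> T \<subseteq> Bs \<and> Inf T \<le> c}" using order_trans by blast
      next
        fix a b assume "a \<in> {c. \<exists>T. finite T \<and> T \<subseteq> Bs \<and> Inf T \<le> c} \<and> b \<in> {c. \<exists>T. finite T \<and> T \<subseteq> Bs \<and> Inf T \<le> c}"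
        then obtain T1 T2 where "finite T1" "T1 \<subseteq> Bs" "Inf T1 \<le> a" "finite T2" "T2 \<subseteq> Bs" "Inf T2 \<le> b" by blast
        then have "finite (T1 \<union> T2)" "T1 \<union> T2 \<subseteq> Bs" "Inf (T1 \<union> T2) \<le> inf a b"
          by (auto simp: Inf_union_distrib intro: le_infI1 le_infI2 inf_mono)
        then show "inf a b \<in> {c. \<exists>T. finite T \<and> T \<subseteq> Bs \<and> Inf T \<le> c}" by blast
      qed
      have tF: "top \<in> F" unfolding F_def by (rule CollectI, rule exI[of _ "{}"]) simp
      have I1: "\<forall>a b. b \<in> I \<and> a \<le> b \<longrightarrow> a \<in> I" unfolding I_def using order_trans by blast
      have I2: "\<forall>a b. a \<in> I \<and> b \<in> I \<longrightarrow> sup a b \<in> I"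
      proof (intro allI impI)
        fix a b assume "a \<in> I \<and> b \<in> I"
        then obtain T1 T2 where "finite T1" "T1 \<subseteq> A" "a \<le> Sup T1" "finite T2" "T2 \<subseteq> A" "b \<le> Sup T2"
          unfolding I_def by blast
        then have "finite (T1 \<union> T2)" "T1 \<union> T2 \<subseteq> A" "sup a b \<le> Sup (T1 \<union> T2)"
          by (auto simp: Sup_union_distrib intro: le_supI1 le_supI2 sup_mono)
        then show "sup a b \<in> I" unfolding I_def by blast
      qed
      have I3: "bot \<in> I" unfolding I_def by (rule CollectI, rule exI[of _ "{}"]) simp
      obtain x where x: "prime_filter x" "F \<subseteq> x" "x \<inter> I = {}"
        using prime_ideal_thm[OF FL uF tF I1 I2 I3 True] by blast
      have "x \<in> pts" using x(1) in_pts by blast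
      then have "x \<in> \<Union>C" using C(2) topspace_XL[where 'a='a] by simp
      then obtain S where S: "S \<in> C" "x \<in> S" by blast
      then have "S \<in> B" using C(1) by blast
      then show ?thesis
      proof (unfold B_def, elim UnE rangeE)
        fix a assume "S = phi a"
        then have "a \<in> A" "a \<in> x" using S by (auto simp: A_def phi_def)
        moreover have "a \<in> I" unfolding I_def using \<open>a \<in> A\<close>
          by (intro CollectI exI[of _ "{a}"]) auto
        ultimately show ?thesis using x by blast
      next
        fix b assume "S = pts - phi b"
        then have "b \<in> Bs" "b \<notin> x" using S x by (auto simp: Bs_def phi_def pts_def)
        moreover have "b \<in> F" unfolding F_def using \<open>b \<in> Bs\<close>
          by (intro CollectI exI[of _ "{b}"]) auto
        ultimately show ?thesis using x by blast
      qed
    next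
      case False
      then obtain c T1 T2 where T: "finite T1" "T1 \<subseteq> A" "c \<le> Sup T1" "finite T2" "T2 \<subseteq> Bs" "Inf T2 \<le> c"
        unfolding F_def I_def by blast
      define C' where "C' = phi ` T1 \<union> (\<lambda>b. pts - phi b) ` T2"
      have "finite C'" using T unfolding C'_def by blast
      moreover have "C' \<subseteq> C" using T unfolding C'_def A_def Bs_def by blast
      moreover have "\<Union>C' = pts"
      proof
        show "\<Union>C' \<subseteq> pts" unfolding C'_def using phi_sub by blast
      next
        show "pts \<subseteq> \<Union>C'"
        proof
          fix x :: "'a set" assume x: "x \<in> pts"
          then have pf: "prime_filter x" by (simp add: in_pts)
          show "x \<in> \<Union>C'"
          proof (cases "T2 \<subseteq> x")
            case True
            then have "Inf T2 \<in> x" using pf_Inf[OF T(4) pf] by blast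
            then have "Sup T1 \<in> x" using pf T by (meson order_trans pf_up)
            then obtain t where "t \<in> T1" "t \<in> x" using pf_Sup[OF T(1) pf] by blast
            then show ?thesis unfolding C'_def using x by (auto simp: phi_def)
          next
            case False
            then obtain b where "b \<in> T2" "b \<notin> x" by blast
            then show ?thesis unfolding C'_def using x by (auto simp: phi_def)
          qed
        qed
      qed
      ultimately show ?thesis unfolding topspace_XL by blast
    qed
  qed
qed

lemma Hausdorff_XL: "Hausdorff_space (XL_top :: 'a::complete_lattice set topology)"
  unfolding Hausdorff_space_def topspace_XL
proof (intro allI impI)
  fix x y :: "'a set" assume xy: "x \<in> pts \<and> y \<in> pts \<and> x \<noteq> y"
  then obtain a where "(a \<in> x \<and> a \<notin> y) \<or> (a \<in> y \<and> a \<notin> x)" by blast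
  then show "\<exists>U V. openin XL_top U \<and> openin XL_top V \<and> x \<in> U \<and> y \<in> V \<and> disjnt U V"
  proof
    assume "a \<in> x \<and> a \<notin> y"
    then show ?thesis using xy openin_phi[of a] openin_cphi[of a]
      by (intro exI[of _ "phi a"] exI[of _ "pts - phi a"]) (auto simp: phi_def disjnt_def)
  next
    assume "a \<in> y \<and> a \<notin> x"
    then show ?thesis using xy openin_phi[of a] openin_cphi[of a]
      by (intro exI[of _ "pts - phi a"] exI[of _ "phi a"]) (auto simp: phi_def disjnt_def)
  qed
qed

lemma stone_XL:
  assumes FL: "frame_law TYPE('a::complete_lattice)"
  shows "stone_space (XL_top :: 'a set topology)"
  unfolding stone_space_def
proof (intro conjI allI impI)
  show "compact_space (XL_top :: 'a set topology)" by (rule compact_XL[OF FL])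
  show "Hausdorff_space (XL_top :: 'a set topology)" by (rule Hausdorff_XL)
  fix U x assume "openin (XL_top :: 'a set topology) U \<and> x \<in> U"
  then obtain c d where cd: "c \<in> x" "d \<notin> x" "phi c - phi d \<subseteq> U" using basic_nbhd by blast
  have "U \<subseteq> pts" using \<open>openin XL_top U \<and> x \<in> U\<close> openin_subset[of "XL_top :: 'a set topology" U]
    unfolding topspace_XL by blast
  then have "x \<in> pts" using \<open>openin XL_top U \<and> x \<in> U\<close> by blast
  then have "x \<in> phi c - phi d" using cd by (auto simp: phi_def)
  moreover have "clopenin (XL_top :: 'a set topology) (phi c - phi d)"
    by (simp add: clopenin_def openin_basic closedin_basic)
  ultimately show "\<exists>C. clopenin XL_top C \<and> x \<in> C \<and> C \<subseteq> U"
    using cd(3) by blast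
qed

lemma upset_XL: "upset (XL_top :: 'a::complete_lattice set topology) (\<subseteq>) U \<longleftrightarrow>
   U \<subseteq> pts \<and> (\<forall>x\<in>U. \<forall>y\<in>pts. x \<subseteq> y \<longrightarrow> y \<in> U)"
  unfolding upset_def topspace_XL by blast

lemma phi_ClopUp: "phi a \<in> ClopUp (XL_top :: 'a::complete_lattice set topology) (\<subseteq>)"
  unfolding ClopUp_def clopenin_def upset_XL
  using openin_phi closedin_phi phi_sub by (auto simp: phi_def pts_def intro: pf_up)

lemma priestley_XL:
  assumes FL: "frame_law TYPE('a::complete_lattice)"
  shows "priestley_space (XL_top :: 'a set topology) (\<subseteq>)"
  unfolding priestley_space_def
proof (intro conjI)
  show "stone_space (XL_top :: 'a set topology)" by (rule stone_XL[OF FL])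
  show "partial_order_on_space (XL_top :: 'a set topology) (\<subseteq>)"
    unfolding partial_order_on_space_def by blast
  show "\<forall>x\<in>topspace XL_top. \<forall>y\<in>topspace XL_top. \<not> x \<subseteq> y \<longrightarrow> (\<exists>U\<in>ClopUp (XL_top :: 'a set topology) (\<subseteq>). x \<in> U \<and> y \<notin> U)"
  proof (intro ballI impI)
    fix x y :: "'a set" assume xy: "x \<in> topspace XL_top" "y \<in> topspace XL_top" "\<not> x \<subseteq> y"
    then obtain a where "a \<in> x" "a \<notin> y" by blast
    then show "\<exists>U\<in>ClopUp XL_top (\<subseteq>). x \<in> U \<and> y \<notin> U"
      using xy phi_ClopUp[of a] topspace_XL by (intro bexI[of _ "phi a"]) (auto simp: phi_def)
  qed
qed



lemma open_upset_union:
  assumes FL: "frame_law TYPE('a::complete_lattice)"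
    and W: "openin (XL_top :: 'a set topology) W" "upset (XL_top :: 'a set topology) (\<subseteq>) W"
  shows "W = \<Union>(phi ` {a. phi a \<subseteq> W})"
proof
  show "\<Union>(phi ` {a. phi a \<subseteq> W}) \<subseteq> W" by blast
next
  show "W \<subseteq> \<Union>(phi ` {a. phi a \<subseteq> W})"
  proof
    fix x assume xW: "x \<in> W"
    have Wp: "W \<subseteq> pts" and up: "\<forall>x\<in>W. \<forall>y\<in>pts. x \<subseteq> y \<longrightarrow> y \<in> W"
      using W(2) unfolding upset_XL by auto
    have pfx: "prime_filter x" using xW Wp in_pts by blast
    have cl: "closedin (XL_top :: 'a set topology) (pts - W)"
      using W(1) unfolding closedin_def topspace_XL using Wp by (simp add: Diff_Diff_Int Int_absorb1)
    then have cpt: "compactin (XL_top :: 'a set topology) (pts - W)"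
      using closedin_compact_space compact_XL[OF FL] by blast
    define \<U> where "\<U> = (\<lambda>a. pts - phi a) ` x"
    have "\<forall>U\<in>\<U>. openin (XL_top :: 'a set topology) U" unfolding \<U>_def using openin_cphi by blast
    moreover have "pts - W \<subseteq> \<Union>\<U>"
    proof
      fix y assume y: "y \<in> pts - W"
      then have "\<not> x \<subseteq> y" using up xW by blast
      then obtain a where "a \<in> x" "a \<notin> y" by blast
      then show "y \<in> \<Union>\<U>" unfolding \<U>_def using y by (auto simp: phi_def)
    qed
    ultimately obtain \<F> where F: "finite \<F>" "\<F> \<subseteq> \<U>" "pts - W \<subseteq> \<Union>\<F>"
      using cpt unfolding compactin_def by meson
    then obtain T where T: "T \<subseteq> x" "finite T" "\<F> = (\<lambda>a. pts - phi a) ` T"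
      unfolding \<U>_def by (meson finite_subset_image)
    have cx: "Inf T \<in> x" using pf_Inf[OF T(2) pfx T(1)] .
    have "phi (Inf T) \<subseteq> W"
    proof
      fix z assume z: "z \<in> phi (Inf T)"
      then have pfz: "prime_filter z" and "Inf T \<in> z" by (auto simp: in_phi)
      then have "\<forall>t\<in>T. t \<in> z" using pf_up by (metis Inf_lower)
      then have "z \<notin> \<Union>\<F>" using T(3) z by (auto simp: phi_def)
      then show "z \<in> W" using F(3) z phi_sub by blast
    qed
    moreover have "x \<in> phi (Inf T)" using cx pfx by (simp add: in_phi)
    ultimately show "x \<in> \<Union>(phi ` {a. phi a \<subseteq> W})" by blast
  qed
qed

lemma closure_Union_phi:
  assumes FL: "frame_law TYPE('a::complete_lattice)"
  shows "(XL_top :: 'a set topology) closure_of (\<Union>(phi ` A)) = phi (Sup A)"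
proof
  show "(XL_top :: 'a set topology) closure_of (\<Union>(phi ` A)) \<subseteq> phi (Sup A)"
    by (rule closure_of_minimal[OF phi_Sup_ge closedin_phi])
next
  show "phi (Sup A) \<subseteq> (XL_top :: 'a set topology) closure_of (\<Union>(phi ` A))"
  proof
    fix x assume x: "x \<in> phi (Sup A)"
    then have pfx: "prime_filter x" and sx: "Sup A \<in> x" by (auto simp: in_phi)
    have "x \<in> topspace (XL_top :: 'a set topology)" using x phi_sub topspace_XL by blast
    moreover have "\<exists>y. y \<in> \<Union>(phi ` A) \<and> y \<in> T" if T: "x \<in> T" "openin (XL_top :: 'a set topology) T" for T
    proof -
      obtain c d where cd: "c \<in> x" "d \<notin> x" "phi c - phi d \<subseteq> T" using basic_nbhd[OF T(2) T(1)] by blast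
      have "\<exists>a\<in>A. \<not> inf c a \<le> d"
      proof (rule ccontr)
        assume "\<not> (\<exists>a\<in>A. \<not> inf c a \<le> d)"
        then have "Sup ((\<lambda>a. inf c a) ` A) \<le> d" by (simp add: SUP_least)
        moreover have "inf c (Sup A) = Sup ((\<lambda>a. inf c a) ` A)" using FL unfolding frame_law_def by blast
        moreover have "inf c (Sup A) \<in> x" using pfx cd sx by (simp add: pf_inf_iff)
        ultimately show False using pfx cd by (metis pf_up)
      qed
      then obtain a where a: "a \<in> A" "\<not> inf c a \<le> d" by blast
      then obtain y where y: "prime_filter y" "inf c a \<in> y" "d \<notin> y" using sep_pf[OF FL] by blast
      then have "y \<in> phi a" "y \<in> phi c - phi d" by (auto simp: in_phi pf_inf_iff)
      then show ?thesis using a cd by blast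
    qed
    ultimately show "x \<in> (XL_top :: 'a set topology) closure_of (\<Union>(phi ` A))"
      unfolding in_closure_of by blast
  qed
qed

lemma ClopUp_phi:
  assumes FL: "frame_law TYPE('a::complete_lattice)"
    and U: "U \<in> ClopUp (XL_top :: 'a set topology) (\<subseteq>)"
  shows "\<exists>a. U = phi a"
proof -
  have Uo: "openin (XL_top :: 'a set topology) U" and Uc: "closedin (XL_top :: 'a set topology) U"
    and Uu: "upset (XL_top :: 'a set topology) (\<subseteq>) U"
    using U unfolding ClopUp_def clopenin_def by auto
  have eq: "U = \<Union>(phi ` {a. phi a \<subseteq> U})" by (rule open_upset_union[OF FL Uo Uu])
  have cpt: "compactin (XL_top :: 'a set topology) U"
    using Uc closedin_compact_space compact_XL[OF FL] by blast
  have "\<forall>V\<in>phi ` {a. phi a \<subseteq> U}. openin (XL_top :: 'a set topology) V" using openin_phi by blast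
  moreover have "U \<subseteq> \<Union>(phi ` {a. phi a \<subseteq> U})" using eq by blast
  ultimately obtain \<F> where F: "finite \<F>" "\<F> \<subseteq> phi ` {a. phi a \<subseteq> U}" "U \<subseteq> \<Union>\<F>"
    using cpt unfolding compactin_def by meson
  then obtain T where T: "T \<subseteq> {a. phi a \<subseteq> U}" "finite T" "\<F> = phi ` T"
    by (meson finite_subset_image)
  have "phi (Sup T) = \<Union>(phi ` T)" by (rule phi_Sup_fin[OF T(2)])
  then have "U = phi (Sup T)" using T F by blast
  then show ?thesis by blast
qed

definition himp :: "'a::complete_lattice \<Rightarrow> 'a \<Rightarrow> 'a" where
  "himp c d = Sup {e. inf e c \<le> d}"

lemma himp_le:
  assumes FL: "frame_law TYPE('a::complete_lattice)"
  shows "inf (himp c d) (c::'a) \<le> d"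
proof -
  have "inf c (himp c d) = Sup ((\<lambda>s. inf c s) ` {e. inf e c \<le> d})"
    using FL unfolding frame_law_def himp_def by blast
  also have "\<dots> \<le> d" by (auto intro!: SUP_least simp: inf_commute)
  finally show ?thesis by (simp add: inf_commute)
qed

lemma downset_basic:
  assumes FL: "frame_law TYPE('a::complete_lattice)"
  shows "downset_of (XL_top :: 'a set topology) (\<subseteq>) (phi c - phi d) = pts - phi (himp c d)"
proof
  show "downset_of (XL_top :: 'a set topology) (\<subseteq>) (phi c - phi d) \<subseteq> pts - phi (himp c d)"
  proof
    fix y assume "y \<in> downset_of (XL_top :: 'a set topology) (\<subseteq>) (phi c - phi d)"
    then obtain x where y: "y \<in> pts" "x \<in> phi c - phi d" "y \<subseteq> x"
      unfolding downset_of_def topspace_XL by blast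
    then have pfx: "prime_filter x" "c \<in> x" "d \<notin> x" by (auto simp: in_phi)
    have "himp c d \<notin> y"
    proof
      assume "himp c d \<in> y"
      then have "himp c d \<in> x" using y by blast
      then have "inf (himp c d) c \<in> x" using pfx by (simp add: pf_inf_iff)
      then show False using pfx himp_le[OF FL] pf_up by metis
    qed
    then show "y \<in> pts - phi (himp c d)" using y by (auto simp: phi_def)
  qed
next
  show "pts - phi (himp c d) \<subseteq> downset_of (XL_top :: 'a set topology) (\<subseteq>) (phi c - phi d)"
  proof
    fix y assume y: "y \<in> pts - phi (himp c d)"
    then have pfy: "prime_filter y" and nh: "himp c d \<notin> y" by (auto simp: in_phi in_pts)
    define F where "F = {z. \<exists>m\<in>y. inf m c \<le> z}"
    have uF: "upc F" unfolding upc_def F_def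
    proof (intro conjI allI impI)
      fix a b assume "a \<in> {z. \<exists>m\<in>y. inf m c \<le> z} \<and> a \<le> b"
      then show "b \<in> {z. \<exists>m\<in>y. inf m c \<le> z}" using order_trans by blast
    next
      fix a b assume "a \<in> {z. \<exists>m\<in>y. inf m c \<le> z} \<and> b \<in> {z. \<exists>m\<in>y. inf m c \<le> z}"
      then obtain m1 m2 where m: "m1 \<in> y" "m2 \<in> y" "inf m1 c \<le> a" "inf m2 c \<le> b" by blast
      have "inf m1 m2 \<in> y" using pfy m by (simp add: pf_inf_iff)
      moreover have "inf (inf m1 m2) c \<le> inf a b" using m
        by (meson inf.cobounded1 inf.cobounded2 le_inf_iff order_trans)
      ultimately show "inf a b \<in> {z. \<exists>m\<in>y. inf m c \<le> z}" by blast
    qed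
    have tF: "top \<in> F" unfolding F_def using pf_top[OF pfy] by (intro CollectI bexI[of _ top]) auto
    have I1: "\<forall>a b. b \<in> {z. z \<le> d} \<and> a \<le> b \<longrightarrow> a \<in> {z. z \<le> d}" by auto
    have I2: "\<forall>a b. a \<in> {z. z \<le> d} \<and> b \<in> {z. z \<le> d} \<longrightarrow> sup a b \<in> {z. z \<le> d}" by auto
    have I3: "bot \<in> {z. z \<le> d}" by auto
    have disj: "F \<inter> {z. z \<le> d} = {}"
    proof -
      { fix z m assume "m \<in> y" "inf m c \<le> z" "z \<le> d"
        then have "m \<le> himp c d" unfolding himp_def by (meson Sup_upper mem_Collect_eq order_trans)
        then have False using \<open>m \<in> y\<close> nh pfy pf_up by metis }
      then show ?thesis unfolding F_def by blast
    qed
    obtain x where x: "prime_filter x" "F \<subseteq> x" "x \<inter> {z. z \<le> d} = {}"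
      using prime_ideal_thm[OF FL uF tF I1 I2 I3 disj] by blast
    have "y \<subseteq> F" unfolding F_def using inf_le1 by blast
    moreover have "c \<in> F" unfolding F_def using pf_top[OF pfy] by (intro CollectI bexI[of _ top]) auto
    moreover have "d \<notin> x" using x(3) by blast
    ultimately have "x \<in> phi c - phi d" "y \<subseteq> x" using x by (auto simp: in_phi)
    then show "y \<in> downset_of (XL_top :: 'a set topology) (\<subseteq>) (phi c - phi d)"
      unfolding downset_of_def topspace_XL using y by blast
  qed
qed

lemma clopen_fin_basic:
  assumes FL: "frame_law TYPE('a::complete_lattice)"
    and C: "clopenin (XL_top :: 'a set topology) C"
  shows "\<exists>P. finite P \<and> C = (\<Union>p\<in>P. phi (fst p) - phi (snd p))"
proof -
  define g :: "'a \<times> 'a \<Rightarrow> 'a set set" where "g p = phi (fst p) - phi (snd p)" for p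
  define Q where "Q = {p. g p \<subseteq> C}"
  have Co: "openin (XL_top :: 'a set topology) C" and Cc: "closedin (XL_top :: 'a set topology) C"
    using C unfolding clopenin_def by auto
  have cover: "C \<subseteq> \<Union>(g ` Q)"
  proof
    fix x assume "x \<in> C"
    then obtain c d where cd: "c \<in> x" "d \<notin> x" "phi c - phi d \<subseteq> C" using basic_nbhd[OF Co] by blast
    have "x \<in> pts" using \<open>x \<in> C\<close> Co openin_subset[of "XL_top :: 'a set topology" C] unfolding topspace_XL by blast
    then have "x \<in> g (c, d)" using cd by (auto simp: g_def phi_def)
    moreover have "(c, d) \<in> Q" using cd by (simp add: Q_def g_def)
    ultimately show "x \<in> \<Union>(g ` Q)" by blast
  qed
  have cpt: "compactin (XL_top :: 'a set topology) C"
    using Cc closedin_compact_space compact_XL[OF FL] by blast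
  have "\<forall>V\<in>g ` Q. openin (XL_top :: 'a set topology) V" unfolding g_def using openin_basic by blast
  then obtain \<F> where F: "finite \<F>" "\<F> \<subseteq> g ` Q" "C \<subseteq> \<Union>\<F>"
    using cpt cover unfolding compactin_def by meson
  then obtain P where P: "P \<subseteq> Q" "finite P" "\<F> = g ` P"
    by (meson finite_subset_image)
  have "C = \<Union>(g ` P)" using P F unfolding Q_def by blast
  then show ?thesis using P(2) unfolding g_def by blast
qed

lemma downset_Union:
  "downset_of X le (\<Union>i\<in>P. f i) = (\<Union>i\<in>P. downset_of X le (f i))"
  unfolding downset_of_def by blast

lemma downset_clopen:
  assumes FL: "frame_law TYPE('a::complete_lattice)"
    and C: "clopenin (XL_top :: 'a set topology) C"
  shows "clopenin (XL_top :: 'a set topology) (downset_of (XL_top :: 'a set topology) (\<subseteq>) C)"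
proof -
  obtain P where P: "finite P" "C = (\<Union>p\<in>P. phi (fst p) - phi (snd p))"
    using clopen_fin_basic[OF FL C] by blast
  have "downset_of (XL_top :: 'a set topology) (\<subseteq>) C = (\<Union>p\<in>P. pts - phi (himp (fst p) (snd p)))"
    unfolding P(2) downset_Union downset_basic[OF FL] ..
  also have "\<dots> = pts - phi (Inf ((\<lambda>p. himp (fst p) (snd p)) ` P))"
    using phi_Inf[of "(\<lambda>p. himp (fst p) (snd p)) ` P"] P(1) by auto
  finally show ?thesis unfolding clopenin_def using openin_cphi closedin_cphi by metis
qed

lemma L_space_XL:
  assumes FL: "frame_law TYPE('a::complete_lattice)"
  shows "L_space (XL_top :: 'a set topology) (\<subseteq>)"
  unfolding L_space_def
proof (intro conjI allI impI)
  show "priestley_space (XL_top :: 'a set topology) (\<subseteq>)" by (rule priestley_XL[OF FL])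
  fix U :: "'a set set"
  show "clopenin XL_top U \<Longrightarrow> clopenin XL_top (downset_of XL_top (\<subseteq>) U)"
    by (rule downset_clopen[OF FL])
next
  fix U :: "'a set set"
  assume U: "openin XL_top U \<and> upset XL_top (\<subseteq>) U"
  then have "U = \<Union>(phi ` {a. phi a \<subseteq> U})" using open_upset_union[OF FL] by blast
  then have "XL_top closure_of U = phi (Sup {a. phi a \<subseteq> U})"
    using closure_Union_phi[OF FL] by metis
  then show "openin XL_top (XL_top closure_of U)" using openin_phi by metis
qed



definition cprime :: "'a::complete_lattice set \<Rightarrow> bool" where
  "cprime y \<longleftrightarrow> prime_filter y \<and> (\<forall>S. Sup S \<in> y \<longrightarrow> (\<exists>s\<in>S. s \<in> y))"

lemma downset_single: "downset_of (XL_top :: 'a::complete_lattice set topology) (\<subseteq>) {y} = {z \<in> pts. z \<subseteq> y}"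
  unfolding downset_of_def topspace_XL by blast

lemma cprime_downset:
  assumes "cprime (y :: 'a::complete_lattice set)"
  shows "{z \<in> pts. z \<subseteq> y} = pts - phi (Sup {b. b \<notin> y})"
proof
  have dy: "Sup {b. b \<notin> y} \<notin> y" using assms unfolding cprime_def by blast
  show "{z \<in> pts. z \<subseteq> y} \<subseteq> pts - phi (Sup {b. b \<notin> y})"
    using dy by (auto simp: phi_def)
  show "pts - phi (Sup {b. b \<notin> y}) \<subseteq> {z \<in> pts. z \<subseteq> y}"
  proof
    fix z assume z: "z \<in> pts - phi (Sup {b. b \<notin> y})"
    then have pfz: "prime_filter z" and nz: "Sup {b. b \<notin> y} \<notin> z" by (auto simp: in_pts phi_def)
    have "z \<subseteq> y"
    proof
      fix b assume "b \<in> z"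
      show "b \<in> y"
      proof (rule ccontr)
        assume "b \<notin> y"
        then have "b \<le> Sup {b. b \<notin> y}" by (simp add: Sup_upper)
        then show False using pfz nz \<open>b \<in> z\<close> pf_up by metis
      qed
    qed
    then show "z \<in> {z \<in> pts. z \<subseteq> y}" using z by blast
  qed
qed

lemma spatial_iff:
  assumes FL: "frame_law TYPE('a::complete_lattice)"
  shows "(y :: 'a set) \<in> spatial_part XL_top (\<subseteq>) \<longleftrightarrow> cprime y"
proof
  assume "cprime y"
  then have "y \<in> pts" unfolding cprime_def by (simp add: in_pts)
  moreover have "clopenin (XL_top :: 'a set topology) (downset_of XL_top (\<subseteq>) {y})"
    unfolding downset_single cprime_downset[OF \<open>cprime y\<close>] clopenin_def
    using openin_cphi closedin_cphi by blast
  ultimately show "y \<in> spatial_part XL_top (\<subseteq>)" unfolding spatial_part_def topspace_XL by blast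
next
  assume y: "y \<in> spatial_part XL_top (\<subseteq>)"
  then have yp: "y \<in> pts" and op: "openin (XL_top :: 'a set topology) {z \<in> pts. z \<subseteq> y}"
    unfolding spatial_part_def topspace_XL downset_single clopenin_def by auto
  then have pfy: "prime_filter y" by (simp add: in_pts)
  have "y \<in> {z \<in> pts. z \<subseteq> y}" using yp by blast
  then obtain c d where cd: "c \<in> y" "d \<notin> y" "phi c - phi d \<subseteq> {z \<in> pts. z \<subseteq> y}"
    using basic_nbhd[OF op] by blast
  have "\<exists>s\<in>S. s \<in> y" if S: "Sup S \<in> y" for S
  proof (rule ccontr)
    assume ns: "\<not> (\<exists>s\<in>S. s \<in> y)"
    have "inf c s \<le> d" if "s \<in> S" for s
    proof (rule ccontr)
      assume "\<not> inf c s \<le> d"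
      then obtain z where z: "prime_filter z" "inf c s \<in> z" "d \<notin> z" using sep_pf[OF FL] by blast
      then have "z \<in> phi c - phi d" by (auto simp: in_phi pf_inf_iff)
      then have "z \<subseteq> y" using cd by blast
      moreover have "s \<in> z" using z by (simp add: pf_inf_iff)
      ultimately show False using ns that by blast
    qed
    then have "Sup ((\<lambda>s. inf c s) ` S) \<le> d" by (simp add: SUP_least)
    moreover have "inf c (Sup S) = Sup ((\<lambda>s. inf c s) ` S)" using FL unfolding frame_law_def by blast
    moreover have "inf c (Sup S) \<in> y" using pfy cd S by (simp add: pf_inf_iff)
    ultimately show False using pfy cd by (metis pf_up)
  qed
  then show "cprime y" using pfy unfolding cprime_def by blast
qed

lemma minimal_cprime:
  assumes FL: "frame_law TYPE('a::complete_lattice)"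
    and k: "compact_el (k::'a)" and x: "x \<in> minimal_of (\<subseteq>) (phi k)"
  shows "cprime x"
proof -
  have xk: "x \<in> phi k" and xmin: "\<forall>y\<in>phi k. y \<subseteq> x \<longrightarrow> y = x" using x unfolding minimal_of_def by auto
  then have pfx: "prime_filter x" and kx: "k \<in> x" by (auto simp: in_phi)
  have "\<exists>s\<in>S. s \<in> x" if S: "Sup S \<in> x" for S
  proof (rule ccontr)
    assume ns: "\<not> (\<exists>s\<in>S. s \<in> x)"
    define I where "I = {c. \<exists>d. d \<notin> x \<and> c \<le> sup d (Sup S)}"
    define F where "F = {c. k \<le> c}"
    have uF: "upc F" unfolding upc_def F_def by (auto intro: order_trans)
    have tF: "top \<in> F" unfolding F_def by simp
    have I1: "\<forall>a b. b \<in> I \<and> a \<le> b \<longrightarrow> a \<in> I" unfolding I_def by (auto intro: order_trans)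
    have I2: "\<forall>a b. a \<in> I \<and> b \<in> I \<longrightarrow> sup a b \<in> I"
    proof (intro allI impI)
      fix a b assume "a \<in> I \<and> b \<in> I"
      then obtain d1 d2 where d: "d1 \<notin> x" "a \<le> sup d1 (Sup S)" "d2 \<notin> x" "b \<le> sup d2 (Sup S)"
        unfolding I_def by blast
      then have "sup d1 d2 \<notin> x" using pfx by (simp add: pf_sup_iff)
      moreover have "sup d1 (Sup S) \<le> sup (sup d1 d2) (Sup S)" "sup d2 (Sup S) \<le> sup (sup d1 d2) (Sup S)"
        by (rule sup_mono, simp, simp)+
      then have "sup a b \<le> sup (sup d1 d2) (Sup S)" using d by (intro le_supI) (rule order_trans, assumption+)+
      ultimately show "sup a b \<in> I" unfolding I_def by blast
    qed
    have botx: "bot \<notin> x" using pf_bot[OF pfx] .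
    have I3: "bot \<in> I" unfolding I_def using botx by (intro CollectI exI[of _ bot]) simp
    have disj: "F \<inter> I = {}"
    proof -
      { fix d assume d: "d \<notin> x" "k \<le> sup d (Sup S)"
        then have "k \<le> Sup (insert d S)" by simp
        then obtain T where T: "finite T" "T \<subseteq> insert d S" "k \<le> Sup T"
          using k unfolding compact_el_def way_below_def by blast
        then have "Sup T \<in> x" using kx pfx pf_up by metis
        then obtain t where "t \<in> T" "t \<in> x" using pf_Sup[OF T(1) pfx] by blast
        then have False using T(2) d ns by blast }
      then show ?thesis unfolding F_def I_def by (auto intro: order_trans)
    qed
    obtain y where y: "prime_filter y" "F \<subseteq> y" "y \<inter> I = {}"
      using prime_ideal_thm[OF FL uF tF I1 I2 I3 disj] by blast
    have "y \<subseteq> x"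
    proof
      fix b assume "b \<in> y"
      show "b \<in> x"
      proof (rule ccontr)
        assume "b \<notin> x"
        then have "b \<in> I" unfolding I_def by (intro CollectI exI[of _ b]) simp
        then show False using y \<open>b \<in> y\<close> by blast
      qed
    qed
    moreover have "y \<in> phi k" using y by (auto simp: in_phi F_def)
    ultimately have "y = x" using xmin by blast
    moreover have "Sup S \<in> I" unfolding I_def using botx by (intro CollectI exI[of _ bot]) simp
    ultimately show False using y S by blast
  qed
  then show ?thesis using pfx unfolding cprime_def by blast
qed

lemma phi_compact_ClopSUp:
  assumes FL: "frame_law TYPE('a::complete_lattice)" and k: "compact_el (k::'a)"
  shows "phi k \<in> ClopSUp (XL_top :: 'a set topology) (\<subseteq>)"
proof -
  have "phi k \<in> ClopUp (XL_top :: 'a set topology) (\<subseteq>)" by (rule phi_ClopUp)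
  moreover have "minimal_of (\<subseteq>) (phi k) \<subseteq> spatial_part (XL_top :: 'a set topology) (\<subseteq>)"
    using minimal_cprime[OF FL k] spatial_iff[OF FL] by blast
  ultimately show ?thesis unfolding ClopSUp_def ClopUp_def scott_upset_def clopenin_def by blast
qed

lemma core_dense:
  assumes AL: "algebraic_frame TYPE('a::complete_lattice)"
    and U: "U \<in> ClopUp (XL_top :: 'a set topology) (\<subseteq>)"
  shows "U \<subseteq> (XL_top :: 'a set topology) closure_of (core_sp XL_top (\<subseteq>) U)"
proof -
  have FL: "frame_law TYPE('a)" using AL unfolding algebraic_frame_def by blast
  obtain a where a: "U = phi a" using ClopUp_phi[OF FL U] by blast
  define K where "K = {b::'a. compact_el b \<and> b \<le> a}"
  have aK: "a = Sup K" using AL unfolding algebraic_frame_def K_def by blast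
  have "\<Union>(phi ` K) \<subseteq> core_sp XL_top (\<subseteq>) U"
    unfolding core_sp_def a K_def using phi_compact_ClopSUp[OF FL] phi_mono by blast
  then have "(XL_top :: 'a set topology) closure_of \<Union>(phi ` K) \<subseteq> XL_top closure_of (core_sp XL_top (\<subseteq>) U)"
    by (rule closure_of_mono)
  moreover have "(XL_top :: 'a set topology) closure_of \<Union>(phi ` K) = U"
    using closure_Union_phi[OF FL, of K] aK a by simp
  ultimately show ?thesis by simp
qed

lemma wb_le: "way_below (b::'a::complete_lattice) a \<Longrightarrow> b \<le> a"
  unfolding way_below_def
  by (metis (no_types, lifting) Sup_subset_mono cSup_singleton dual_order.trans order_refl)

lemma wb_left: "way_below (b::'a::complete_lattice) a \<Longrightarrow> b' \<le> b \<Longrightarrow> way_below b' a"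
  unfolding way_below_def by (meson order_trans)

lemma wb_right: "way_below (b::'a::complete_lattice) a \<Longrightarrow> a \<le> a' \<Longrightarrow> way_below b a'"
  unfolding way_below_def by (meson order_trans)

lemma wb_Sup_fin: "finite T \<Longrightarrow> (\<forall>t\<in>T. way_below t (a::'a::complete_lattice)) \<Longrightarrow> way_below (Sup T) a"
proof (induction T rule: finite_induct)
  case empty
  show ?case unfolding way_below_def by (intro allI impI exI[of _ "{}"]) simp
next
  case (insert t T)
  have "way_below t a" "way_below (Sup T) a" using insert by auto
  show ?case unfolding way_below_def
  proof (intro allI impI)
    fix S assume "a \<le> Sup S"
    then obtain T1 T2 where "finite T1" "T1 \<subseteq> S" "t \<le> Sup T1" "finite T2" "T2 \<subseteq> S" "Sup T \<le> Sup T2"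
      using \<open>way_below t a\<close> \<open>way_below (Sup T) a\<close> unfolding way_below_def by meson
    then have "finite (T1 \<union> T2)" "T1 \<union> T2 \<subseteq> S" "Sup (insert t T) \<le> Sup (T1 \<union> T2)"
      by (auto simp: Sup_union_distrib intro: le_supI1 le_supI2 sup_mono)
    then show "\<exists>T'. finite T' \<and> T' \<subseteq> S \<and> Sup (insert t T) \<le> Sup T'" by blast
  qed
qed

lemma wbsp_iff:
  assumes FL: "frame_law TYPE('a::complete_lattice)"
  shows "way_below_sp (XL_top :: 'a set topology) (\<subseteq>) (phi b) (phi a) \<longleftrightarrow> way_below b a"
proof
  assume wb: "way_below_sp (XL_top :: 'a set topology) (\<subseteq>) (phi b) (phi a)"
  show "way_below b a" unfolding way_below_def
  proof (intro allI impI)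
    fix S assume aS: "a \<le> Sup S"
    define W where "W = \<Union>(phi ` S)"
    have Wo: "openin (XL_top :: 'a set topology) W" unfolding W_def using openin_phi by blast
    have Wu: "upset (XL_top :: 'a set topology) (\<subseteq>) W" unfolding W_def upset_XL
      using phi_sub by (auto simp: phi_def pts_def intro: pf_up)
    have "phi a \<subseteq> (XL_top :: 'a set topology) closure_of W"
      unfolding W_def closure_Union_phi[OF FL] using aS phi_mono by blast
    then have bW: "phi b \<subseteq> W" using wb Wo Wu unfolding way_below_sp_def by blast
    have cpt: "compactin (XL_top :: 'a set topology) (phi b)"
      using closedin_phi closedin_compact_space compact_XL[OF FL] by blast
    have "\<forall>V\<in>phi ` S. openin (XL_top :: 'a set topology) V" using openin_phi by blast
    then obtain \<F> where F: "finite \<F>" "\<F> \<subseteq> phi ` S" "phi b \<subseteq> \<Union>\<F>"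
      using cpt bW unfolding compactin_def W_def by meson
    then obtain T where T: "T \<subseteq> S" "finite T" "\<F> = phi ` T"
      by (meson finite_subset_image)
    then have "phi b \<subseteq> phi (Sup T)" using F phi_Sup_fin[OF T(2)] by simp
    then have "b \<le> Sup T" using phi_le_iff[OF FL] by blast
    then show "\<exists>T. finite T \<and> T \<subseteq> S \<and> b \<le> Sup T" using T by blast
  qed
next
  assume wb: "way_below b a"
  show "way_below_sp (XL_top :: 'a set topology) (\<subseteq>) (phi b) (phi a)" unfolding way_below_sp_def
  proof (intro allI impI)
    fix W assume W: "openin (XL_top :: 'a set topology) W \<and> upset XL_top (\<subseteq>) W \<and> phi a \<subseteq> XL_top closure_of W"
    define A where "A = {c. phi c \<subseteq> W}"
    have eq: "W = \<Union>(phi ` A)" unfolding A_def using open_upset_union[OF FL] W by blast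
    then have "phi a \<subseteq> phi (Sup A)" using W closure_Union_phi[OF FL] by metis
    then have "a \<le> Sup A" using phi_le_iff[OF FL] by blast
    then obtain T where T: "finite T" "T \<subseteq> A" "b \<le> Sup T" using wb unfolding way_below_def by blast
    then have "phi b \<subseteq> \<Union>(phi ` T)" using phi_mono phi_Sup_fin[OF T(1)] by metis
    then show "phi b \<subseteq> W" using T(2) unfolding A_def by blast
  qed
qed

lemma ker_phi:
  assumes FL: "frame_law TYPE('a::complete_lattice)"
  shows "ker_sp (XL_top :: 'a set topology) (\<subseteq>) (phi a) = \<Union>(phi ` {b. way_below b a})"
proof
  show "ker_sp (XL_top :: 'a set topology) (\<subseteq>) (phi a) \<subseteq> \<Union>(phi ` {b. way_below b a})"
  proof
    fix x assume "x \<in> ker_sp (XL_top :: 'a set topology) (\<subseteq>) (phi a)"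
    then obtain V where V: "V \<in> ClopUp (XL_top :: 'a set topology) (\<subseteq>)" "way_below_sp XL_top (\<subseteq>) V (phi a)" "x \<in> V"
      unfolding ker_sp_def by blast
    then obtain b where "V = phi b" using ClopUp_phi[OF FL] by blast
    then show "x \<in> \<Union>(phi ` {b. way_below b a})" using V wbsp_iff[OF FL] by blast
  qed
next
  show "\<Union>(phi ` {b. way_below b a}) \<subseteq> ker_sp (XL_top :: 'a set topology) (\<subseteq>) (phi a)"
    unfolding ker_sp_def using wbsp_iff[OF FL] phi_ClopUp by blast
qed



lemma coherent_imp_L:
  assumes C: "coherent_frame TYPE('a::complete_lattice)"
  shows "coherent_L_space (XL_top :: 'a set topology) (\<subseteq>)"
proof -
  have AL: "algebraic_frame TYPE('a)" and st: "\<forall>a b c::'a. way_below a b \<and> way_below a c \<longrightarrow> way_below a (inf b c)"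
    and ct: "compact_el (top::'a)"
    using C unfolding coherent_frame_def arithmetic_frame_def by auto
  have FL: "frame_law TYPE('a)" using AL unfolding algebraic_frame_def by blast
  show ?thesis unfolding coherent_L_space_def
  proof (intro conjI ballI)
    show "L_space (XL_top :: 'a set topology) (\<subseteq>)" by (rule L_space_XL[OF FL])
  next
    fix U assume "U \<in> ClopUp (XL_top :: 'a set topology) (\<subseteq>)"
    then show "U \<subseteq> XL_top closure_of core_sp XL_top (\<subseteq>) U" by (rule core_dense[OF AL])
  next
    fix U V assume U: "U \<in> ClopUp (XL_top :: 'a set topology) (\<subseteq>)" and V: "V \<in> ClopUp (XL_top :: 'a set topology) (\<subseteq>)"
    obtain a where a: "U = phi a" using ClopUp_phi[OF FL U] by blast
    obtain c where c: "V = phi c" using ClopUp_phi[OF FL V] by blast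
    have "U \<inter> V = phi (inf a c)" using a c phi_inf by blast
    then have "ker_sp XL_top (\<subseteq>) (U \<inter> V) = \<Union>(phi ` {b. way_below b (inf a c)})" using ker_phi[OF FL] by metis
    also have "\<dots> = \<Union>(phi ` {b. way_below b a}) \<inter> \<Union>(phi ` {b. way_below b c})"
    proof
      show "\<Union>(phi ` {b. way_below b (inf a c)}) \<subseteq> \<Union>(phi ` {b. way_below b a}) \<inter> \<Union>(phi ` {b. way_below b c})"
        using wb_right[of _ "inf a c" a] wb_right[of _ "inf a c" c] by fastforce
    next
      show "\<Union>(phi ` {b. way_below b a}) \<inter> \<Union>(phi ` {b. way_below b c}) \<subseteq> \<Union>(phi ` {b. way_below b (inf a c)})"
      proof
        fix x assume "x \<in> \<Union>(phi ` {b. way_below b a}) \<inter> \<Union>(phi ` {b. way_below b c})"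
        then obtain b1 b2 where b: "way_below b1 a" "x \<in> phi b1" "way_below b2 c" "x \<in> phi b2" by blast
        have "way_below (inf b1 b2) a" "way_below (inf b1 b2) c" using b wb_left by (meson inf_le1 inf_le2)+
        then have "way_below (inf b1 b2) (inf a c)" using st by blast
        moreover have "x \<in> phi (inf b1 b2)" using b phi_inf by blast
        ultimately show "x \<in> \<Union>(phi ` {b. way_below b (inf a c)})" by blast
      qed
    qed
    also have "\<dots> = ker_sp XL_top (\<subseteq>) U \<inter> ker_sp XL_top (\<subseteq>) V" using a c ker_phi[OF FL] by metis
    finally show "ker_sp XL_top (\<subseteq>) (U \<inter> V) = ker_sp XL_top (\<subseteq>) U \<inter> ker_sp XL_top (\<subseteq>) V" .
  next
    have "ker_sp (XL_top :: 'a set topology) (\<subseteq>) (phi top) = \<Union>(phi ` {b. way_below b top})" by (rule ker_phi[OF FL])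
    moreover have "phi top \<subseteq> \<Union>(phi ` {b::'a. way_below b top})" using ct unfolding compact_el_def by blast
    moreover have "\<Union>(phi ` {b::'a. way_below b top}) \<subseteq> phi top" using phi_sub phi_top by blast
    ultimately show "topspace (XL_top :: 'a set topology) = ker_sp XL_top (\<subseteq>) (topspace XL_top)"
      unfolding topspace_XL phi_top by blast
  qed
qed

lemma L_imp_coherent:
  assumes AL: "algebraic_frame TYPE('a::complete_lattice)"
    and C: "coherent_L_space (XL_top :: 'a set topology) (\<subseteq>)"
  shows "coherent_frame TYPE('a)"
proof -
  have FL: "frame_law TYPE('a)" using AL unfolding algebraic_frame_def by blast
  have kerI: "\<forall>U\<in>ClopUp (XL_top :: 'a set topology) (\<subseteq>). \<forall>V\<in>ClopUp (XL_top :: 'a set topology) (\<subseteq>).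
      ker_sp XL_top (\<subseteq>) (U \<inter> V) = ker_sp XL_top (\<subseteq>) U \<inter> ker_sp XL_top (\<subseteq>) V"
    and kerX: "topspace (XL_top :: 'a set topology) = ker_sp XL_top (\<subseteq>) (topspace XL_top)"
    using C unfolding coherent_L_space_def by auto
  have cover: "\<exists>T. finite T \<and> T \<subseteq> {b. way_below b a} \<and> phi d \<subseteq> phi (Sup T)"
    if H: "phi d \<subseteq> \<Union>(phi ` {b::'a. way_below b a})" for a d :: 'a
  proof -
    have cpt: "compactin (XL_top :: 'a set topology) (phi d)"
      using closedin_phi closedin_compact_space compact_XL[OF FL] by blast
    have "\<forall>V\<in>phi ` {b. way_below b a}. openin (XL_top :: 'a set topology) V" using openin_phi by blast
    then obtain \<F> where F: "finite \<F>" "\<F> \<subseteq> phi ` {b. way_below b a}" "phi d \<subseteq> \<Union>\<F>"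
      using cpt H unfolding compactin_def by meson
    then obtain T where T: "T \<subseteq> {b. way_below b a}" "finite T" "\<F> = phi ` T"
      by (meson finite_subset_image)
    then have "phi d \<subseteq> phi (Sup T)" using F phi_Sup_fin[OF T(2)] by simp
    then show ?thesis using T by blast
  qed
  have ct: "compact_el (top::'a)"
  proof -
    have e1: "ker_sp (XL_top::'a set topology) (\<subseteq>) pts = pts" using kerX topspace_XL[where 'a='a] by simp
    have "ker_sp (XL_top::'a set topology) (\<subseteq>) (phi top) = \<Union>(phi ` {b::'a. way_below b top})"
      by (rule ker_phi[OF FL])
    then have "\<Union>(phi ` {b::'a. way_below b top}) = phi (top::'a)" using e1 phi_top[where 'a='a] by simp
    then have "phi top \<subseteq> \<Union>(phi ` {b::'a. way_below b top})" by simp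
    then obtain T :: "'a set" where T: "finite T" "T \<subseteq> {b. way_below b top}" "phi (top::'a) \<subseteq> phi (Sup T)"
      using cover[of top top] by blast
    then have "top \<le> Sup T" using phi_le_iff[OF FL] by blast
    then have "Sup T = top" by (simp add: top_le)
    moreover have "way_below (Sup T) top" using wb_Sup_fin[OF T(1)] T(2) by blast
    ultimately show ?thesis unfolding compact_el_def by simp
  qed
  have st: "\<forall>a b c::'a. way_below a b \<and> way_below a c \<longrightarrow> way_below a (inf b c)"
  proof (intro allI impI)
    fix a b c :: 'a assume abc: "way_below a b \<and> way_below a c"
    have "phi a \<subseteq> ker_sp XL_top (\<subseteq>) (phi b)" "phi a \<subseteq> ker_sp XL_top (\<subseteq>) (phi c)"
      unfolding ker_phi[OF FL] using abc by blast+
    moreover have "ker_sp XL_top (\<subseteq>) (phi b \<inter> phi c) = ker_sp XL_top (\<subseteq>) (phi b) \<inter> ker_sp XL_top (\<subseteq>) (phi c)"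
      using bspec[OF bspec[OF kerI phi_ClopUp[of b]] phi_ClopUp[of c]] .
    ultimately have "phi a \<subseteq> ker_sp XL_top (\<subseteq>) (phi b \<inter> phi c)" by blast
    then have "phi a \<subseteq> \<Union>(phi ` {d. way_below d (inf b c)})" unfolding phi_inf[symmetric] ker_phi[OF FL] .
    then obtain T where T: "finite T" "T \<subseteq> {d. way_below d (inf b c)}" "phi a \<subseteq> phi (Sup T)"
      using cover[of a "inf b c"] by blast
    then have "a \<le> Sup T" using phi_le_iff[OF FL] by blast
    moreover have "way_below (Sup T) (inf b c)" using wb_Sup_fin[OF T(1)] T(2) by blast
    ultimately show "way_below a (inf b c)" using wb_left by blast
  qed
  show ?thesis unfolding coherent_frame_def arithmetic_frame_def using AL ct st by blast
qed

definition YS :: "'a::complete_lattice set set" where "YS = {y. cprime y}"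

lemma YS_eq:
  assumes FL: "frame_law TYPE('a::complete_lattice)"
  shows "spatial_part (XL_top :: 'a set topology) (\<subseteq>) = YS"
  using spatial_iff[OF FL] unfolding YS_def by blast

lemma YS_pts: "YS \<subseteq> pts" unfolding YS_def cprime_def pts_def by blast

lemma O_Sup: "\<Union>((\<lambda>a. phi a \<inter> YS) ` A) = phi (Sup A) \<inter> YS"
proof
  show "\<Union>((\<lambda>a. phi a \<inter> YS) ` A) \<subseteq> phi (Sup A) \<inter> YS"
    using phi_mono[OF Sup_upper] by blast
  show "phi (Sup A) \<inter> YS \<subseteq> \<Union>((\<lambda>a. phi a \<inter> YS) ` A)"
  proof
    fix y assume y: "y \<in> phi (Sup A) \<inter> YS"
    then have "cprime y" "Sup A \<in> y" by (auto simp: YS_def in_phi)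
    then obtain a where "a \<in> A" "a \<in> y" unfolding cprime_def by blast
    then show "y \<in> \<Union>((\<lambda>a. phi a \<inter> YS) ` A)" using y by (auto simp: in_phi YS_def cprime_def)
  qed
qed

lemma open_spatial:
  assumes FL: "frame_law TYPE('a::complete_lattice)"
  shows "openin (spatial_top (XL_top :: 'a set topology) (\<subseteq>)) S \<longleftrightarrow> (\<exists>a::'a. S = phi a \<inter> YS)"
proof
  assume "\<exists>a::'a. S = phi a \<inter> YS"
  then obtain a :: 'a where a: "S = phi a \<inter> YS" by blast
  have "phi a \<in> ClopUp (XL_top :: 'a set topology) (\<subseteq>)" by (rule phi_ClopUp)
  then show "openin (spatial_top (XL_top :: 'a set topology) (\<subseteq>)) S"
    unfolding spatial_top_def YS_eq[OF FL] a by (intro topology_generated_by_Basis) blast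
next
  assume "openin (spatial_top (XL_top :: 'a set topology) (\<subseteq>)) S"
  then have "generate_topology_on ((\<lambda>U. U \<inter> YS) ` ClopUp (XL_top :: 'a set topology) (\<subseteq>)) S"
    unfolding spatial_top_def YS_eq[OF FL] by (simp add: openin_topology_generated_by_iff)
  then show "\<exists>a::'a. S = phi a \<inter> YS"
  proof (induction rule: generate_topology_on.induct)
    case Empty
    then show ?case by (intro exI[of _ bot]) (simp add: phi_bot)
  next
    case (Int a b)
    then obtain c d :: 'a where "a = phi c \<inter> YS" "b = phi d \<inter> YS" by blast
    then show ?case by (intro exI[of _ "inf c d"]) (auto simp: phi_inf)
  next
    case (UN K)
    define A where "A = {a::'a. phi a \<inter> YS \<in> K}"
    have "\<Union>K = \<Union>((\<lambda>a. phi a \<inter> YS) ` A)" unfolding A_def using UN.IH by blast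
    then show ?case unfolding O_Sup by blast
  next
    case (Basis s)
    then obtain U where U: "U \<in> ClopUp (XL_top :: 'a set topology) (\<subseteq>)" "s = U \<inter> YS" by blast
    then obtain a where "U = phi a" using ClopUp_phi[OF FL U(1)] by blast
    then show ?case using U by blast
  qed
qed

lemma topspace_spatial:
  assumes FL: "frame_law TYPE('a::complete_lattice)"
  shows "topspace (spatial_top (XL_top :: 'a set topology) (\<subseteq>)) = YS"
proof -
  have "topspace (spatial_top (XL_top :: 'a set topology) (\<subseteq>)) = \<Union>((\<lambda>U. U \<inter> YS) ` ClopUp (XL_top :: 'a set topology) (\<subseteq>))"
    unfolding spatial_top_def YS_eq[OF FL] by simp
  moreover have "phi top \<in> ClopUp (XL_top :: 'a set topology) (\<subseteq>)" by (rule phi_ClopUp)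
  ultimately show ?thesis using YS_pts phi_top by blast
qed

lemma exists_minimal:
  assumes FL: "frame_law TYPE('a::complete_lattice)"
    and x: "prime_filter x" "(k::'a) \<in> x"
  shows "\<exists>z. z \<in> minimal_of (\<subseteq>) (phi k) \<and> z \<subseteq> x"
proof -
  define Z where "Z = {z. prime_filter z \<and> k \<in> z \<and> z \<subseteq> x}"
  define A where "A = uminus ` Z"
  have "\<forall>C\<in>chains A. \<exists>U\<in>A. \<forall>X\<in>C. X \<subseteq> U"
  proof
    fix C assume C: "C \<in> chains A"
    show "\<exists>U\<in>A. \<forall>X\<in>C. X \<subseteq> U"
    proof (cases "C = {}")
      case True
      have "x \<in> Z" using x by (simp add: Z_def)
      then show ?thesis using True unfolding A_def by blast
    next
      case False
      define D where "D = uminus ` C"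
      have CA: "C \<subseteq> A" using C by (simp add: chains_def)
      have DZ: "D \<subseteq> Z" unfolding D_def using CA unfolding A_def by auto
      have chD: "\<And>X Y. X \<in> D \<Longrightarrow> Y \<in> D \<Longrightarrow> X \<subseteq> Y \<or> Y \<subseteq> X"
        using C unfolding D_def chains_def chain_subset_def by auto
      have Dne: "D \<noteq> {}" using False unfolding D_def by blast
      have pD: "\<And>z. z \<in> D \<Longrightarrow> prime_filter z" and kD: "\<And>z. z \<in> D \<Longrightarrow> k \<in> z" and xD: "\<And>z. z \<in> D \<Longrightarrow> z \<subseteq> x"
        using DZ unfolding Z_def by auto
      have "prime_filter (\<Inter>D)"
        unfolding prime_filter_def
      proof (intro conjI allI impI)
        show "top \<in> \<Inter>D" using pD pf_top by blast
        show "bot \<notin> \<Inter>D" using pD pf_bot Dne by blast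
      next
        fix a b assume "a \<in> \<Inter>D \<and> a \<le> b" then show "b \<in> \<Inter>D" using pD pf_up by blast
      next
        fix a b assume "a \<in> \<Inter>D \<and> b \<in> \<Inter>D" then show "inf a b \<in> \<Inter>D" using pD pf_inf by blast
      next
        fix a b assume ab: "sup a b \<in> \<Inter>D"
        show "a \<in> \<Inter>D \<or> b \<in> \<Inter>D"
        proof (rule ccontr)
          assume "\<not> (a \<in> \<Inter>D \<or> b \<in> \<Inter>D)"
          then obtain z1 z2 where z: "z1 \<in> D" "a \<notin> z1" "z2 \<in> D" "b \<notin> z2" by blast
          show False
          proof (cases "z1 \<subseteq> z2")
            case True
            then have "b \<notin> z1" using z by blast
            moreover have "sup a b \<in> z1" using ab z(1) by blast
            ultimately show False using z pD[OF z(1)] by (simp add: pf_sup_iff)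
          next
            case False
            then have "z2 \<subseteq> z1" using chD z by blast
            then have "a \<notin> z2" using z by blast
            moreover have "sup a b \<in> z2" using ab z(3) by blast
            ultimately show False using z pD[OF z(3)] by (simp add: pf_sup_iff)
          qed
        qed
      qed
      moreover have "k \<in> \<Inter>D" using kD by blast
      moreover have "\<Inter>D \<subseteq> x" using xD Dne by blast
      ultimately have "\<Inter>D \<in> Z" unfolding Z_def by blast
      then have "- \<Inter>D \<in> A" unfolding A_def by blast
      moreover have "\<forall>X\<in>C. X \<subseteq> - \<Inter>D" unfolding D_def by blast
      ultimately show ?thesis by blast
    qed
  qed
  from Zorn_Lemma2[OF this] obtain M where MA: "M \<in> A" and Mmax: "\<forall>X\<in>A. M \<subseteq> X \<longrightarrow> X = M" by blast
  then obtain z where zZ: "z \<in> Z" and Mz: "M = - z" unfolding A_def by blast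
  have "z \<in> phi k" using zZ by (simp add: Z_def in_phi)
  moreover have "\<forall>y\<in>phi k. y \<subseteq> z \<longrightarrow> y = z"
  proof (intro ballI impI)
    fix y assume y: "y \<in> phi k" "y \<subseteq> z"
    then have "y \<in> Z" using zZ unfolding Z_def by (auto simp: in_phi)
    then have "- y \<in> A" unfolding A_def by blast
    moreover have "M \<subseteq> - y" using Mz y by blast
    ultimately have "- y = M" using Mmax by blast
    then show "y = z" using Mz by simp
  qed
  ultimately show ?thesis unfolding minimal_of_def using zZ Z_def by blast
qed

lemma O_le:
  assumes AL: "algebraic_frame TYPE('a::complete_lattice)"
  shows "phi (a::'a) \<inter> YS \<subseteq> phi b \<inter> YS \<longleftrightarrow> a \<le> b"
proof
  show "a \<le> b \<Longrightarrow> phi a \<inter> YS \<subseteq> phi b \<inter> YS" using phi_mono by blast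
next
  assume sub: "phi a \<inter> YS \<subseteq> phi b \<inter> YS"
  have FL: "frame_law TYPE('a)" using AL unfolding algebraic_frame_def by blast
  show "a \<le> b"
  proof (rule ccontr)
    assume nab: "\<not> a \<le> b"
    have "\<exists>k. compact_el k \<and> k \<le> a \<and> \<not> k \<le> b"
    proof (rule ccontr)
      assume "\<not> (\<exists>k. compact_el k \<and> k \<le> a \<and> \<not> k \<le> b)"
      then have "Sup {k. compact_el k \<and> k \<le> a} \<le> b" by (auto intro!: Sup_least)
      moreover have "a = Sup {k. compact_el k \<and> k \<le> a}" using AL unfolding algebraic_frame_def by blast
      ultimately show False using nab by simp
    qed
    then obtain k where k: "compact_el k" "k \<le> a" "\<not> k \<le> b" by blast
    obtain x where x: "prime_filter x" "k \<in> x" "b \<notin> x" using sep_pf[OF FL k(3)] by blast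
    obtain z where z: "z \<in> minimal_of (\<subseteq>) (phi k)" "z \<subseteq> x" using exists_minimal[OF FL x(1,2)] by blast
    have cz: "cprime z" by (rule minimal_cprime[OF FL k(1) z(1)])
    have "k \<in> z" using z(1) unfolding minimal_of_def by (simp add: in_phi)
    then have "a \<in> z" using cz k(2) unfolding cprime_def by (meson pf_up)
    then have "z \<in> phi a \<inter> YS" using cz by (simp add: in_phi YS_def cprime_def)
    moreover have "z \<notin> phi b" using z(2) x(3) by (auto simp: in_phi)
    ultimately show False using sub by blast
  qed
qed



lemma cpt_O:
  assumes AL: "algebraic_frame TYPE('a::complete_lattice)"
  shows "compactin (spatial_top (XL_top :: 'a set topology) (\<subseteq>)) (phi (a::'a) \<inter> YS) \<longleftrightarrow> compact_el a"
proof -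
  have FL: "frame_law TYPE('a)" using AL unfolding algebraic_frame_def by blast
  have sub: "phi a \<inter> YS \<subseteq> topspace (spatial_top (XL_top :: 'a set topology) (\<subseteq>))"
    unfolding topspace_spatial[OF FL] by blast
  show ?thesis
  proof
    assume cpt: "compactin (spatial_top (XL_top :: 'a set topology) (\<subseteq>)) (phi a \<inter> YS)"
    show "compact_el a" unfolding compact_el_def way_below_def
    proof (intro allI impI)
      fix S assume aS: "a \<le> Sup S"
      have "\<forall>U\<in>(\<lambda>s. phi s \<inter> YS) ` S. openin (spatial_top (XL_top :: 'a set topology) (\<subseteq>)) U"
        using open_spatial[OF FL] by blast
      moreover have "phi a \<inter> YS \<subseteq> \<Union>((\<lambda>s. phi s \<inter> YS) ` S)"
        unfolding O_Sup using aS phi_mono by blast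
      ultimately obtain \<F> where F: "finite \<F>" "\<F> \<subseteq> (\<lambda>s. phi s \<inter> YS) ` S" "phi a \<inter> YS \<subseteq> \<Union>\<F>"
        using cpt unfolding compactin_def by meson
      then obtain T where T: "T \<subseteq> S" "finite T" "\<F> = (\<lambda>s. phi s \<inter> YS) ` T"
        by (meson finite_subset_image)
      have "\<Union>\<F> = phi (Sup T) \<inter> YS" unfolding T(3) by (rule O_Sup)
      then have "phi a \<inter> YS \<subseteq> phi (Sup T) \<inter> YS" using F(3) by simp
      then have "a \<le> Sup T" using O_le[OF AL] by blast
      then show "\<exists>T. finite T \<and> T \<subseteq> S \<and> a \<le> Sup T" using T by blast
    qed
  next
    assume ca: "compact_el a"
    show "compactin (spatial_top (XL_top :: 'a set topology) (\<subseteq>)) (phi a \<inter> YS)"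
      unfolding compactin_def
    proof (intro conjI allI impI)
      show "phi a \<inter> YS \<subseteq> topspace (spatial_top XL_top (\<subseteq>))" by (rule sub)
    next
      fix \<U> assume U: "(\<forall>U\<in>\<U>. openin (spatial_top (XL_top :: 'a set topology) (\<subseteq>)) U) \<and> phi a \<inter> YS \<subseteq> \<Union>\<U>"
      define A where "A = {c::'a. phi c \<inter> YS \<in> \<U>}"
      have UA: "\<U> = (\<lambda>c. phi c \<inter> YS) ` A"
      proof
        show "\<U> \<subseteq> (\<lambda>c. phi c \<inter> YS) ` A"
        proof
          fix U assume "U \<in> \<U>"
          then obtain c :: 'a where "U = phi c \<inter> YS" using U open_spatial[OF FL] by blast
          then show "U \<in> (\<lambda>c. phi c \<inter> YS) ` A" unfolding A_def using \<open>U \<in> \<U>\<close> by blast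
        qed
        show "(\<lambda>c. phi c \<inter> YS) ` A \<subseteq> \<U>" unfolding A_def by blast
      qed
      have "\<Union>\<U> = phi (Sup A) \<inter> YS" unfolding UA by (rule O_Sup)
      then have "phi a \<inter> YS \<subseteq> phi (Sup A) \<inter> YS" using U by blast
      then have "a \<le> Sup A" using O_le[OF AL] by blast
      then obtain T where T: "finite T" "T \<subseteq> A" "a \<le> Sup T"
        using ca unfolding compact_el_def way_below_def by blast
      then have "phi a \<inter> YS \<subseteq> \<Union>((\<lambda>c. phi c \<inter> YS) ` T)" unfolding O_Sup using phi_mono by blast
      moreover have "(\<lambda>c. phi c \<inter> YS) ` T \<subseteq> \<U>" using T(2) UA by blast
      ultimately show "\<exists>\<F>. finite \<F> \<and> \<F> \<subseteq> \<U> \<and> phi a \<inter> YS \<subseteq> \<Union>\<F>" using T(1) by blast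
    qed
  qed
qed

lemma closure_single:
  assumes FL: "frame_law TYPE('a::complete_lattice)" and x: "(x :: 'a set) \<in> YS"
  shows "spatial_top (XL_top :: 'a set topology) (\<subseteq>) closure_of {x} = {z \<in> YS. z \<subseteq> x}"
proof
  show "spatial_top (XL_top :: 'a set topology) (\<subseteq>) closure_of {x} \<subseteq> {z \<in> YS. z \<subseteq> x}"
  proof
    fix z assume z: "z \<in> spatial_top (XL_top :: 'a set topology) (\<subseteq>) closure_of {x}"
    then have zY: "z \<in> YS" and H: "\<forall>T. z \<in> T \<and> openin (spatial_top (XL_top :: 'a set topology) (\<subseteq>)) T \<longrightarrow> x \<in> T"
      unfolding closure_of_def topspace_spatial[OF FL] by auto
    have "b \<in> x" if "b \<in> z" for b
    proof -
      have "z \<in> phi b \<inter> YS" using zY that by (auto simp: YS_def cprime_def in_phi)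
      moreover have "openin (spatial_top (XL_top :: 'a set topology) (\<subseteq>)) (phi b \<inter> YS)"
        using open_spatial[OF FL] by blast
      ultimately have "x \<in> phi b" using H by blast
      then show ?thesis by (simp add: in_phi)
    qed
    then show "z \<in> {z \<in> YS. z \<subseteq> x}" using zY by blast
  qed
next
  show "{z \<in> YS. z \<subseteq> x} \<subseteq> spatial_top (XL_top :: 'a set topology) (\<subseteq>) closure_of {x}"
  proof
    fix z assume z: "z \<in> {z \<in> YS. z \<subseteq> x}"
    have "x \<in> T" if T: "z \<in> T" "openin (spatial_top (XL_top :: 'a set topology) (\<subseteq>)) T" for T
    proof -
      obtain a :: 'a where a: "T = phi a \<inter> YS" using T(2) open_spatial[OF FL] by blast
      then have "a \<in> z" using T(1) by (simp add: in_phi)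
      then have "a \<in> x" using z by blast
      then show ?thesis using a x by (auto simp: YS_def cprime_def in_phi)
    qed
    then show "z \<in> spatial_top (XL_top :: 'a set topology) (\<subseteq>) closure_of {x}"
      unfolding closure_of_def topspace_spatial[OF FL] using z by blast
  qed
qed

lemma sober_ST:
  assumes FL: "frame_law TYPE('a::complete_lattice)"
  shows "sober_space (spatial_top (XL_top :: 'a set topology) (\<subseteq>))"
  unfolding sober_space_def
proof (intro allI impI)
  fix C assume CC: "closedin (spatial_top (XL_top :: 'a set topology) (\<subseteq>)) C \<and> irreducible_in (spatial_top (XL_top :: 'a set topology) (\<subseteq>)) C"
  have CY: "C \<subseteq> YS" and op: "openin (spatial_top (XL_top :: 'a set topology) (\<subseteq>)) (YS - C)"
    using CC unfolding closedin_def topspace_spatial[OF FL] by auto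
  obtain a :: 'a where a: "YS - C = phi a \<inter> YS" using op open_spatial[OF FL] by blast
  have Ceq: "C = YS - phi a" using a CY by blast
  have Cne: "C \<noteq> {}" and irr: "\<And>A B. closedin (spatial_top (XL_top :: 'a set topology) (\<subseteq>)) A \<Longrightarrow>
      closedin (spatial_top (XL_top :: 'a set topology) (\<subseteq>)) B \<Longrightarrow> C \<subseteq> A \<union> B \<Longrightarrow> C \<subseteq> A \<or> C \<subseteq> B"
    using CC unfolding irreducible_in_def by blast+
  have clc: "closedin (spatial_top (XL_top :: 'a set topology) (\<subseteq>)) (YS - phi b)" for b :: 'a
  proof -
    have "YS - (YS - phi b) = phi b \<inter> YS" by blast
    then show ?thesis unfolding closedin_def topspace_spatial[OF FL] using open_spatial[OF FL] by auto
  qed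
  define y where "y = {b::'a. C \<inter> phi b \<noteq> {}}"
  have Cpf: "\<And>z. z \<in> C \<Longrightarrow> cprime z" using CY unfolding YS_def by blast
  have cy: "cprime y" unfolding cprime_def prime_filter_def
  proof (intro conjI allI impI)
    have "C \<subseteq> phi (top::'a)" using CY YS_pts[where 'a='a] phi_top[where 'a='a] by simp
    then show "top \<in> y" unfolding y_def using Cne by blast
    show "bot \<notin> y" unfolding y_def by (simp add: phi_bot)
  next
    fix a1 b1 :: 'a assume ab: "a1 \<in> y \<and> a1 \<le> b1"
    then have s1: "phi a1 \<subseteq> phi b1" using phi_mono[of a1 b1] by blast
    have "C \<inter> phi a1 \<noteq> {}" using ab by (simp add: y_def)
    then have "C \<inter> phi b1 \<noteq> {}" using s1 by blast
    then show "b1 \<in> y" by (simp add: y_def)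
  next
    fix b c :: 'a assume bc: "b \<in> y \<and> c \<in> y"
    have bc': "C \<inter> phi b \<noteq> {}" "C \<inter> phi c \<noteq> {}" using bc by (simp_all add: y_def)
    show "inf b c \<in> y"
    proof (rule ccontr)
      assume "inf b c \<notin> y"
      then have "C \<inter> (phi b \<inter> phi c) = {}" by (simp add: y_def phi_inf)
      then have "C \<subseteq> (YS - phi b) \<union> (YS - phi c)" using CY by blast
      then have "C \<subseteq> YS - phi b \<or> C \<subseteq> YS - phi c" using irr[OF clc clc] by blast
      then show False using bc' by blast
    qed
  next
    fix a1 b1 :: 'a assume "sup a1 b1 \<in> y"
    then have "C \<inter> (phi a1 \<union> phi b1) \<noteq> {}" by (simp add: y_def phi_sup)
    then have "C \<inter> phi a1 \<noteq> {} \<or> C \<inter> phi b1 \<noteq> {}" by blast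
    then show "a1 \<in> y \<or> b1 \<in> y" by (simp add: y_def)
  next
    fix S :: "'a set" assume "Sup S \<in> y"
    then have "C \<inter> phi (Sup S) \<noteq> {}" by (simp add: y_def)
    then obtain z where z: "z \<in> C" "Sup S \<in> z" by (auto simp: in_phi)
    have cz: "cprime z" using Cpf[OF z(1)] .
    then obtain s where s: "s \<in> S" "s \<in> z" using z(2) unfolding cprime_def by blast
    then have "z \<in> phi s" using cz unfolding cprime_def by (simp add: in_phi)
    then have "C \<inter> phi s \<noteq> {}" using z(1) by blast
    then have "s \<in> y" by (simp add: y_def)
    then show "\<exists>s\<in>S. s \<in> y" using s(1) by blast
  qed
  then have yY: "y \<in> YS" by (simp add: YS_def)
  have "C = {z \<in> YS. z \<subseteq> y}"
  proof
    show "C \<subseteq> {z \<in> YS. z \<subseteq> y}"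
    proof
      fix z assume z: "z \<in> C"
      have "b \<in> y" if bz: "b \<in> z" for b
      proof -
        have "z \<in> phi b" using bz Cpf[OF z] unfolding cprime_def by (simp add: in_phi)
        then have "C \<inter> phi b \<noteq> {}" using z by blast
        then show ?thesis by (simp add: y_def)
      qed
      then show "z \<in> {z \<in> YS. z \<subseteq> y}" using z CY by blast
    qed
  next
    show "{z \<in> YS. z \<subseteq> y} \<subseteq> C"
    proof
      fix z assume z: "z \<in> {z \<in> YS. z \<subseteq> y}"
      have "C \<inter> phi a = {}" unfolding Ceq by blast
      then have "a \<notin> y" by (simp add: y_def)
      then have "a \<notin> z" using z by blast
      then show "z \<in> C" unfolding Ceq using z by (simp add: in_phi)
    qed
  qed
  then have "C = spatial_top (XL_top :: 'a set topology) (\<subseteq>) closure_of {y}"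
    using closure_single[OF FL yY] by simp
  moreover have "\<forall>x'. x' \<in> topspace (spatial_top (XL_top :: 'a set topology) (\<subseteq>)) \<and> C = spatial_top XL_top (\<subseteq>) closure_of {x'} \<longrightarrow> x' = y"
  proof (intro allI impI)
    fix x' assume H: "x' \<in> topspace (spatial_top (XL_top :: 'a set topology) (\<subseteq>)) \<and> C = spatial_top XL_top (\<subseteq>) closure_of {x'}"
    then have x'Y: "x' \<in> YS" unfolding topspace_spatial[OF FL] by blast
    have "{z \<in> YS. z \<subseteq> x'} = {z \<in> YS. z \<subseteq> y}"
      using H \<open>C = {z \<in> YS. z \<subseteq> y}\<close> closure_single[OF FL x'Y] by simp
    then show "x' = y" using x'Y yY by blast
  qed
  moreover have "y \<in> topspace (spatial_top (XL_top :: 'a set topology) (\<subseteq>))" using yY topspace_spatial[OF FL] by blast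
  ultimately show "\<exists>!x. x \<in> topspace (spatial_top (XL_top :: 'a set topology) (\<subseteq>)) \<and> C = spatial_top XL_top (\<subseteq>) closure_of {x}"
    by blast
qed

lemma wb_compact_between:
  assumes AL: "algebraic_frame TYPE('a::complete_lattice)" and wb: "way_below (a::'a) b"
  shows "\<exists>k. compact_el k \<and> a \<le> k \<and> k \<le> b"
proof -
  have "b = Sup {k. compact_el k \<and> k \<le> b}" using AL unfolding algebraic_frame_def by blast
  then have "b \<le> Sup {k. compact_el k \<and> k \<le> b}" by simp
  then obtain T where T: "finite T" "T \<subseteq> {k. compact_el k \<and> k \<le> b}" "a \<le> Sup T"
    using wb unfolding way_below_def by blast
  have "\<forall>t\<in>T. way_below t (Sup T)" using T(2) unfolding compact_el_def using wb_right Sup_upper by blast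
  then have "compact_el (Sup T)" unfolding compact_el_def using wb_Sup_fin[OF T(1)] by blast
  moreover have "Sup T \<le> b" using T(2) by (auto intro: Sup_least)
  ultimately show ?thesis using T(3) by blast
qed

lemma spectral_iff:
  assumes AL: "algebraic_frame TYPE('a::complete_lattice)"
  shows "spectral_space (spatial_top (XL_top :: 'a set topology) (\<subseteq>)) \<longleftrightarrow> coherent_frame TYPE('a)"
proof -
  have FL: "frame_law TYPE('a)" using AL unfolding algebraic_frame_def by blast
  have tsp: "topspace (spatial_top (XL_top :: 'a set topology) (\<subseteq>)) = phi (top::'a) \<inter> YS"
    unfolding topspace_spatial[OF FL] phi_top using YS_pts by blast
  have cs: "compact_space (spatial_top (XL_top :: 'a set topology) (\<subseteq>)) \<longleftrightarrow> compact_el (top::'a)"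
    unfolding compact_space_def tsp by (rule cpt_O[OF AL])
  have basis: "\<forall>U x. openin (spatial_top (XL_top :: 'a set topology) (\<subseteq>)) U \<and> x \<in> U \<longrightarrow>
      (\<exists>K. openin (spatial_top (XL_top :: 'a set topology) (\<subseteq>)) K \<and> compactin (spatial_top (XL_top :: 'a set topology) (\<subseteq>)) K \<and> x \<in> K \<and> K \<subseteq> U)"
  proof (intro allI impI)
    fix U x assume Ux: "openin (spatial_top (XL_top :: 'a set topology) (\<subseteq>)) U \<and> x \<in> U"
    then obtain a :: 'a where a: "U = phi a \<inter> YS" using open_spatial[OF FL] by blast
    define K where "K = {k::'a. compact_el k \<and> k \<le> a}"
    have "a = Sup K" using AL unfolding algebraic_frame_def K_def by blast
    then have "x \<in> \<Union>((\<lambda>k. phi k \<inter> YS) ` K)" using Ux a O_Sup[of K] by simp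
    then obtain k where k: "k \<in> K" "x \<in> phi k \<inter> YS" by blast
    have "openin (spatial_top (XL_top :: 'a set topology) (\<subseteq>)) (phi k \<inter> YS)" using open_spatial[OF FL] by blast
    moreover have "compactin (spatial_top (XL_top :: 'a set topology) (\<subseteq>)) (phi k \<inter> YS)"
      using cpt_O[OF AL] k(1) unfolding K_def by blast
    moreover have "phi k \<inter> YS \<subseteq> U" using a k(1) phi_mono unfolding K_def by blast
    ultimately show "\<exists>K. openin (spatial_top (XL_top :: 'a set topology) (\<subseteq>)) K \<and> compactin (spatial_top (XL_top :: 'a set topology) (\<subseteq>)) K \<and> x \<in> K \<and> K \<subseteq> U"
      using k(2) by blast
  qed
  have cpo: "openin (spatial_top (XL_top :: 'a set topology) (\<subseteq>)) K \<and> compactin (spatial_top (XL_top :: 'a set topology) (\<subseteq>)) K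
      \<longleftrightarrow> (\<exists>k::'a. compact_el k \<and> K = phi k \<inter> YS)" for K
    using open_spatial[OF FL] cpt_O[OF AL] by metis
  have inter: "(\<forall>K1 K2. openin (spatial_top (XL_top :: 'a set topology) (\<subseteq>)) K1 \<and> compactin (spatial_top (XL_top :: 'a set topology) (\<subseteq>)) K1 \<and>
        openin (spatial_top (XL_top :: 'a set topology) (\<subseteq>)) K2 \<and> compactin (spatial_top (XL_top :: 'a set topology) (\<subseteq>)) K2
        \<longrightarrow> compactin (spatial_top (XL_top :: 'a set topology) (\<subseteq>)) (K1 \<inter> K2))
      \<longleftrightarrow> (\<forall>k1 k2::'a. compact_el k1 \<and> compact_el k2 \<longrightarrow> compact_el (inf k1 k2))"
  proof
    assume H: "\<forall>K1 K2. openin (spatial_top (XL_top :: 'a set topology) (\<subseteq>)) K1 \<and> compactin (spatial_top (XL_top :: 'a set topology) (\<subseteq>)) K1 \<and>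
        openin (spatial_top (XL_top :: 'a set topology) (\<subseteq>)) K2 \<and> compactin (spatial_top (XL_top :: 'a set topology) (\<subseteq>)) K2
        \<longrightarrow> compactin (spatial_top (XL_top :: 'a set topology) (\<subseteq>)) (K1 \<inter> K2)"
    show "\<forall>k1 k2::'a. compact_el k1 \<and> compact_el k2 \<longrightarrow> compact_el (inf k1 k2)"
    proof (intro allI impI)
      fix k1 k2 :: 'a assume k: "compact_el k1 \<and> compact_el k2"
      then have "compactin (spatial_top (XL_top :: 'a set topology) (\<subseteq>)) ((phi k1 \<inter> YS) \<inter> (phi k2 \<inter> YS))"
        using H cpo by blast
      moreover have "(phi k1 \<inter> YS) \<inter> (phi k2 \<inter> YS) = phi (inf k1 k2) \<inter> YS" by (auto simp: phi_inf)
      ultimately show "compact_el (inf k1 k2)" using cpt_O[OF AL] by metis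
    qed
  next
    assume H: "\<forall>k1 k2::'a. compact_el k1 \<and> compact_el k2 \<longrightarrow> compact_el (inf k1 k2)"
    show "\<forall>K1 K2. openin (spatial_top (XL_top :: 'a set topology) (\<subseteq>)) K1 \<and> compactin (spatial_top (XL_top :: 'a set topology) (\<subseteq>)) K1 \<and>
        openin (spatial_top (XL_top :: 'a set topology) (\<subseteq>)) K2 \<and> compactin (spatial_top (XL_top :: 'a set topology) (\<subseteq>)) K2
        \<longrightarrow> compactin (spatial_top (XL_top :: 'a set topology) (\<subseteq>)) (K1 \<inter> K2)"
    proof (intro allI impI)
      fix K1 K2 assume KK: "openin (spatial_top (XL_top :: 'a set topology) (\<subseteq>)) K1 \<and> compactin (spatial_top (XL_top :: 'a set topology) (\<subseteq>)) K1 \<and>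
        openin (spatial_top (XL_top :: 'a set topology) (\<subseteq>)) K2 \<and> compactin (spatial_top (XL_top :: 'a set topology) (\<subseteq>)) K2"
      then obtain k1 k2 :: 'a where k: "compact_el k1" "K1 = phi k1 \<inter> YS" "compact_el k2" "K2 = phi k2 \<inter> YS"
        using cpo by meson
      then have "K1 \<inter> K2 = phi (inf k1 k2) \<inter> YS" by (auto simp: phi_inf)
      moreover have "compact_el (inf k1 k2)" using H k by blast
      ultimately show "compactin (spatial_top (XL_top :: 'a set topology) (\<subseteq>)) (K1 \<inter> K2)" using cpt_O[OF AL] by metis
    qed
  qed
  have coh: "coherent_frame TYPE('a) \<longleftrightarrow> compact_el (top::'a) \<and> (\<forall>k1 k2::'a. compact_el k1 \<and> compact_el k2 \<longrightarrow> compact_el (inf k1 k2))"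
  proof
    assume C: "coherent_frame TYPE('a)"
    then have st: "\<forall>a b c::'a. way_below a b \<and> way_below a c \<longrightarrow> way_below a (inf b c)"
      and ct: "compact_el (top::'a)" unfolding coherent_frame_def arithmetic_frame_def by auto
    have "compact_el (inf k1 k2)" if "compact_el k1" "compact_el k2" for k1 k2 :: 'a
    proof -
      have "way_below (inf k1 k2) k1" "way_below (inf k1 k2) k2"
        using that wb_left unfolding compact_el_def by (meson inf_le1 inf_le2)+
      then show ?thesis using st unfolding compact_el_def by blast
    qed
    then show "compact_el (top::'a) \<and> (\<forall>k1 k2::'a. compact_el k1 \<and> compact_el k2 \<longrightarrow> compact_el (inf k1 k2))"
      using ct by blast
  next
    assume H: "compact_el (top::'a) \<and> (\<forall>k1 k2::'a. compact_el k1 \<and> compact_el k2 \<longrightarrow> compact_el (inf k1 k2))"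
    have "way_below a (inf b c)" if w: "way_below a b" "way_below a c" for a b c :: 'a
    proof -
      obtain k1 where k1: "compact_el k1" "a \<le> k1" "k1 \<le> b" using wb_compact_between[OF AL w(1)] by blast
      obtain k2 where k2: "compact_el k2" "a \<le> k2" "k2 \<le> c" using wb_compact_between[OF AL w(2)] by blast
      have "compact_el (inf k1 k2)" using H k1 k2 by blast
      then have "way_below (inf k1 k2) (inf b c)" unfolding compact_el_def
        using wb_right k1 k2 by (meson inf_mono)
      then show ?thesis using wb_left k1 k2 by (meson le_inf_iff)
    qed
    then show "coherent_frame TYPE('a)" unfolding coherent_frame_def arithmetic_frame_def using AL H by blast
  qed
  show ?thesis unfolding spectral_space_def coh using cs basis inter sober_ST[OF FL] by blast
qed

theorem theorem5p8:
  assumes "algebraic_frame TYPE('a::complete_lattice)"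
  shows "(coherent_frame TYPE('a) \<longleftrightarrow> coherent_L_space (XL_top :: 'a set topology) (\<subseteq>))
       \<and> (coherent_L_space (XL_top :: 'a set topology) (\<subseteq>)
            \<longleftrightarrow> spectral_space (spatial_top (XL_top :: 'a set topology) (\<subseteq>)))"
  using coherent_imp_L L_imp_coherent[OF assms] spectral_iff[OF assms] by blast


end
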